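(* Given a linear-non-linear adjunction $\mathcal F\dashv\mathcal U$, define $\mathcal F^S:S(\mathscr C)\to LS(\mathscr C)$ by $\mathcal F^S(X,J):=(X,\mathcal F(J))$ and, for $(f,u):(X,J)\to(Y,K)$, $\mathcal F^S(f,u):=(f,m_{X,J};\mathcal F(u))$. Then $\mathcal F^S$ is a functor and a split fibred functor from $\mathbf s$ to $\mathbf{ls}$ (i.e. $\mathbf{ls}\circ\mathcal F^S=\mathbf s$ and it preserves the chosen cartesian morphisms). Moreover, on each fibre over $X$ it is a symmetric lax monoidal functor from $(S(\mathscr C)_X,\times_X,(X,I))$ to $(LS(\mathscr C)_X,\otimes_X,(X,1))$, with structure maps $(\mathrm{id}_X,(\mathbf w_X\otimes\mathrm{id}_1);m_1):(X,1)\to\mathcal F^S(X,I)$ and $(\mathrm{id}_X,(\mathbf w_X\otimes\mathrm{id}_{\mathcal F(J)\otimes\mathcal F(K)});m_{J,K}):\mathcal F^S(X,J)\otimes_X\mathcal F^S(X,K)\to\mathcal F^S((X,J)\times_X(X,K))$.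
   Context: Composition is diagrammatic; monoidal categories are strict. A linear-non-linear adjunction is a symmetric monoidal adjunction $\mathcal F\dashv\mathcal U$, $\mathcal F:\mathscr C\to\mathcal L$, between a cartesian category $(\mathscr C,\times,I)$ and a symmetric monoidal category $(\mathcal L,\otimes,1)$ (symmetry $\sigma$); $\mathcal F$ strong monoidal via isomorphisms $m_{X,Y}:\mathcal F(X)\otimes\mathcal F(Y)\to\mathcal F(X\times Y)$, $m_1:1\to\mathcal F(I)$. $\mathbf c_X:=\mathcal F(\Delta_X);m_{X,X}^{-1}$, $\mathbf w_X:=\mathcal F(t_X);m_1^{-1}$ with $t_X:X\to I$ terminal. Simple category $S(\mathscr C)$: objects $(X,J)$; morphisms $(f,u):(X,J)\to(Y,K)$ with $f:X\to Y$, $u:X\times J\to K$; composition $(f,u);(g,v)=(f;g,(\Delta_X\times\mathrm{id}_J);(f\times u);v)$, identity $(\mathrm{id}_X,\pi_2)$; split fibration $\mathbf s(f,u)=f$ with chosen cartesian morphisms $(f,\pi_2):(X,K)\to(Y,K)$; fibre $S(\mathscr C)_X$ has cartesian product $(X,J)\times_X(X,K)=(X,J\times K)$, unit $(X,I)$. Linear simple category $LS(\mathscr C)$: objects $(X,A)$, $X\in\mathscr C,A\in\mathcal L$; morphisms $(f,u):(X,A)\to(Y,B)$ with $f:X\to Y$, $u:\mathcal F(X)\otimes A\to B$; composition $(f,u);(g,v)=(f;g,(\mathbf c_X\otimes\mathrm{id}_A);(\mathcal F(f)\otimes u);v)$, identity $(\mathrm{id}_X,\mathbf w_X\otimes\mathrm{id}_A)$;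 split fibration $\mathbf{ls}(f,u)=f$ with chosen cartesian morphisms $(f,\mathbf w_X\otimes\mathrm{id}_B):(X,B)\to(Y,B)$; fibre $LS(\mathscr C)_X$ (morphisms $(\mathrm{id}_X,u)$) has monoidal structure $(X,A)\otimes_X(X,B)=(X,A\otimes B)$, unit $(X,1)$, $(\mathrm{id}_X,u)\otimes_X(\mathrm{id}_X,v)=(\mathrm{id}_X,(\mathbf c_X\otimes\mathrm{id}_{A\otimes B});(\mathrm{id}_{\mathcal F(X)}\otimes\sigma_{\mathcal F(X),A}\otimes\mathrm{id}_B);(u\otimes v))$. Structure maps are given by their second components (first component $\mathrm{id}_X$). *)

theory Defs
  imports Main
begin

section \<open>Categories (diagrammatic composition: Cmp f g = f;g)\<close>

record ('o,'m) cat =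
  Obj :: "'o set"
  Arr :: "'m set"
  Dom :: "'m \<Rightarrow> 'o"
  Cod :: "'m \<Rightarrow> 'o"
  Idt :: "'o \<Rightarrow> 'm"
  Cmp :: "'m \<Rightarrow> 'm \<Rightarrow> 'm"

record ('o,'m) mcat = "('o,'m) cat" +
  Ten :: "'o \<Rightarrow> 'o \<Rightarrow> 'o"
  TenA :: "'m \<Rightarrow> 'm \<Rightarrow> 'm"
  Unit :: "'o"

record ('o,'m) smcat = "('o,'m) mcat" +
  Sym :: "'o \<Rightarrow> 'o \<Rightarrow> 'm"

text \<open>Strict cartesian categories: the strict monoidal structure is given by
  chosen products (projections Pr1, Pr2, pairing Pair) and terminal object
  Unit (with terminal maps Term).\<close>
record ('o,'m) ccat = "('o,'m) mcat" +
  Pr1 :: "'o \<Rightarrow> 'o \<Rightarrow> 'm"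
  Pr2 :: "'o \<Rightarrow> 'o \<Rightarrow> 'm"
  Pair :: "'m \<Rightarrow> 'm \<Rightarrow> 'm"
  Term :: "'o \<Rightarrow> 'm"

definition hom :: "('o,'m,'z) cat_scheme \<Rightarrow> 'o \<Rightarrow> 'o \<Rightarrow> 'm set" where
  "hom C X Y = {f \<in> Arr C. Dom C f = X \<and> Cod C f = Y}"

definition category :: "('o,'m,'z) cat_scheme \<Rightarrow> bool" where
  "category C \<longleftrightarrow>
    (\<forall>f\<in>Arr C. Dom C f \<in> Obj C \<and> Cod C f \<in> Obj C) \<and>
    (\<forall>X\<in>Obj C. Idt C X \<in> hom C X X) \<and>
    (\<forall>f\<in>Arr C. \<forall>g\<in>Arr C. Cod C f = Dom C g \<longrightarrow> Cmp C f g \<in> hom C (Dom C f) (Cod C g)) \<and>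
    (\<forall>f\<in>Arr C. Cmp C (Idt C (Dom C f)) f = f \<and> Cmp C f (Idt C (Cod C f)) = f) \<and>
    (\<forall>f\<in>Arr C. \<forall>g\<in>Arr C. \<forall>h\<in>Arr C. Cod C f = Dom C g \<longrightarrow> Cod C g = Dom C h \<longrightarrow>
        Cmp C (Cmp C f g) h = Cmp C f (Cmp C g h))"

definition monoidal :: "('o,'m,'z) mcat_scheme \<Rightarrow> bool" where
  "monoidal C \<longleftrightarrow> category C \<and> Unit C \<in> Obj C \<and>
    (\<forall>A\<in>Obj C. \<forall>B\<in>Obj C. Ten C A B \<in> Obj C) \<and>
    (\<forall>f\<in>Arr C. \<forall>g\<in>Arr C.
        TenA C f g \<in> hom C (Ten C (Dom C f) (Dom C g)) (Ten C (Cod C f) (Cod C g))) \<and>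
    (\<forall>A\<in>Obj C. \<forall>B\<in>Obj C. TenA C (Idt C A) (Idt C B) = Idt C (Ten C A B)) \<and>
    (\<forall>f\<in>Arr C. \<forall>g\<in>Arr C. \<forall>f'\<in>Arr C. \<forall>g'\<in>Arr C.
        Cod C f = Dom C g \<longrightarrow> Cod C f' = Dom C g' \<longrightarrow>
        TenA C (Cmp C f g) (Cmp C f' g') = Cmp C (TenA C f f') (TenA C g g')) \<and>
    (\<forall>A\<in>Obj C. \<forall>B\<in>Obj C. \<forall>D\<in>Obj C. Ten C (Ten C A B) D = Ten C A (Ten C B D)) \<and>
    (\<forall>f\<in>Arr C. \<forall>g\<in>Arr C. \<forall>h\<in>Arr C. TenA C (TenA C f g) h = TenA C f (TenA C g h)) \<and>
    (\<forall>A\<in>Obj C. Ten C (Unit C) A = A \<and> Ten C A (Unit C) = A) \<and>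
    (\<forall>f\<in>Arr C. TenA C (Idt C (Unit C)) f = f \<and> TenA C f (Idt C (Unit C)) = f)"

definition symmetric :: "('o,'m,'z) smcat_scheme \<Rightarrow> bool" where
  "symmetric C \<longleftrightarrow> monoidal C \<and>
    (\<forall>A\<in>Obj C. \<forall>B\<in>Obj C. Sym C A B \<in> hom C (Ten C A B) (Ten C B A)) \<and>
    (\<forall>f\<in>Arr C. \<forall>g\<in>Arr C.
        Cmp C (TenA C f g) (Sym C (Cod C f) (Cod C g)) = Cmp C (Sym C (Dom C f) (Dom C g)) (TenA C g f)) \<and>
    (\<forall>A\<in>Obj C. \<forall>B\<in>Obj C. Cmp C (Sym C A B) (Sym C B A) = Idt C (Ten C A B)) \<and>
    (\<forall>A\<in>Obj C. \<forall>B\<in>Obj C. \<forall>D\<in>Obj C.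
        Sym C A (Ten C B D) = Cmp C (TenA C (Sym C A B) (Idt C D)) (TenA C (Idt C B) (Sym C A D)))"

definition cartesian :: "('o,'m,'z) ccat_scheme \<Rightarrow> bool" where
  "cartesian C \<longleftrightarrow> monoidal C \<and>
    (\<forall>A\<in>Obj C. \<forall>B\<in>Obj C. Pr1 C A B \<in> hom C (Ten C A B) A \<and> Pr2 C A B \<in> hom C (Ten C A B) B) \<and>
    (\<forall>f\<in>Arr C. \<forall>g\<in>Arr C. Dom C f = Dom C g \<longrightarrow>
        Pair C f g \<in> hom C (Dom C f) (Ten C (Cod C f) (Cod C g)) \<and>
        Cmp C (Pair C f g) (Pr1 C (Cod C f) (Cod C g)) = f \<and>
        Cmp C (Pair C f g) (Pr2 C (Cod C f) (Cod C g)) = g) \<and>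
    (\<forall>h\<in>Arr C. \<forall>A\<in>Obj C. \<forall>B\<in>Obj C. Cod C h = Ten C A B \<longrightarrow>
        Pair C (Cmp C h (Pr1 C A B)) (Cmp C h (Pr2 C A B)) = h) \<and>
    (\<forall>Z\<in>Obj C. Term C Z \<in> hom C Z (Unit C)) \<and>
    (\<forall>h\<in>Arr C. Cod C h = Unit C \<longrightarrow> h = Term C (Dom C h)) \<and>
    (\<forall>f\<in>Arr C. \<forall>g\<in>Arr C.
        Cmp C (TenA C f g) (Pr1 C (Cod C f) (Cod C g)) = Cmp C (Pr1 C (Dom C f) (Dom C g)) f \<and>
        Cmp C (TenA C f g) (Pr2 C (Cod C f) (Cod C g)) = Cmp C (Pr2 C (Dom C f) (Dom C g)) g) \<and>
    (\<forall>A\<in>Obj C. \<forall>B\<in>Obj C. \<forall>D\<in>Obj C.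
        Pr1 C A (Ten C B D) = Cmp C (Pr1 C (Ten C A B) D) (Pr1 C A B) \<and>
        Cmp C (Pr2 C A (Ten C B D)) (Pr1 C B D) = Cmp C (Pr1 C (Ten C A B) D) (Pr2 C A B) \<and>
        Pr2 C (Ten C A B) D = Cmp C (Pr2 C A (Ten C B D)) (Pr2 C B D)) \<and>
    (\<forall>A\<in>Obj C. Pr1 C A (Unit C) = Idt C A \<and> Pr2 C (Unit C) A = Idt C A)"

definition diag :: "('o,'m,'z) ccat_scheme \<Rightarrow> 'o \<Rightarrow> 'm" where
  "diag C X = Pair C (Idt C X) (Idt C X)"

definition csym :: "('o,'m,'z) ccat_scheme \<Rightarrow> 'o \<Rightarrow> 'o \<Rightarrow> 'm" where
  "csym C A B = Pair C (Pr2 C A B) (Pr1 C A B)"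

definition "functor" :: "('o,'m,'z1) cat_scheme \<Rightarrow> ('p,'n,'z2) cat_scheme \<Rightarrow>
    ('o \<Rightarrow> 'p) \<Rightarrow> ('m \<Rightarrow> 'n) \<Rightarrow> bool" where
  "functor C D Fo Fm \<longleftrightarrow>
    (\<forall>X\<in>Obj C. Fo X \<in> Obj D) \<and>
    (\<forall>f\<in>Arr C. Fm f \<in> hom D (Fo (Dom C f)) (Fo (Cod C f))) \<and>
    (\<forall>X\<in>Obj C. Fm (Idt C X) = Idt D (Fo X)) \<and>
    (\<forall>f\<in>Arr C. \<forall>g\<in>Arr C. Cod C f = Dom C g \<longrightarrow> Fm (Cmp C f g) = Cmp D (Fm f) (Fm g))"

definition sym_lax_monoidal_functor :: "('o,'m,'z1) smcat_scheme \<Rightarrow> ('p,'n,'z2) smcat_scheme \<Rightarrow>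
    ('o \<Rightarrow> 'p) \<Rightarrow> ('m \<Rightarrow> 'n) \<Rightarrow> 'n \<Rightarrow> ('o \<Rightarrow> 'o \<Rightarrow> 'n) \<Rightarrow> bool" where
  "sym_lax_monoidal_functor D E Fo Fm phi0 phi \<longleftrightarrow>
    functor D E Fo Fm \<and>
    phi0 \<in> hom E (Unit E) (Fo (Unit D)) \<and>
    (\<forall>A\<in>Obj D. \<forall>B\<in>Obj D. phi A B \<in> hom E (Ten E (Fo A) (Fo B)) (Fo (Ten D A B))) \<and>
    (\<forall>f\<in>Arr D. \<forall>g\<in>Arr D.
        Cmp E (TenA E (Fm f) (Fm g)) (phi (Cod D f) (Cod D g)) =
        Cmp E (phi (Dom D f) (Dom D g)) (Fm (TenA D f g))) \<and>
    (\<forall>A\<in>Obj D. \<forall>B\<in>Obj D. \<forall>C\<in>Obj D.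
        Cmp E (TenA E (phi A B) (Idt E (Fo C))) (phi (Ten D A B) C) =
        Cmp E (TenA E (Idt E (Fo A)) (phi B C)) (phi A (Ten D B C))) \<and>
    (\<forall>A\<in>Obj D.
        Cmp E (TenA E phi0 (Idt E (Fo A))) (phi (Unit D) A) = Idt E (Fo A) \<and>
        Cmp E (TenA E (Idt E (Fo A)) phi0) (phi A (Unit D)) = Idt E (Fo A)) \<and>
    (\<forall>A\<in>Obj D. \<forall>B\<in>Obj D.
        Cmp E (phi A B) (Fm (Sym D A B)) = Cmp E (Sym E (Fo A) (Fo B)) (phi B A))"

record ('o,'m,'p,'n) lnl_data =
  FO :: "'o \<Rightarrow> 'p"
  FA :: "'m \<Rightarrow> 'n"
  mT :: "'o \<Rightarrow> 'o \<Rightarrow> 'n"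
  mTi :: "'o \<Rightarrow> 'o \<Rightarrow> 'n"
  mU :: "'n"
  mUi :: "'n"
  UO :: "'p \<Rightarrow> 'o"
  UA :: "'n \<Rightarrow> 'm"
  eta :: "'o \<Rightarrow> 'm"
  eps :: "'p \<Rightarrow> 'n"

text \<open>An adjunction F -| U with F strong symmetric monoidal (equivalently, by
  doctrinal adjunction, a symmetric monoidal adjunction), F from a cartesian
  category C to a symmetric monoidal category L.\<close>
definition lnl_adjunction :: "('o,'m,'z1) ccat_scheme \<Rightarrow> ('p,'n,'z2) smcat_scheme \<Rightarrow>
    ('o,'m,'p,'n) lnl_data \<Rightarrow> bool" where
  "lnl_adjunction C L F \<longleftrightarrow>
    cartesian C \<and> symmetric L \<and>
    functor C L (FO F) (FA F) \<and> functor L C (UO F) (UA F) \<and>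
    \<comment> \<open>strong monoidal structure: isomorphisms m_{X,Y} and m_1\<close>
    (\<forall>X\<in>Obj C. \<forall>Y\<in>Obj C.
        mT F X Y \<in> hom L (Ten L (FO F X) (FO F Y)) (FO F (Ten C X Y)) \<and>
        mTi F X Y \<in> hom L (FO F (Ten C X Y)) (Ten L (FO F X) (FO F Y)) \<and>
        Cmp L (mT F X Y) (mTi F X Y) = Idt L (Ten L (FO F X) (FO F Y)) \<and>
        Cmp L (mTi F X Y) (mT F X Y) = Idt L (FO F (Ten C X Y))) \<and>
    mU F \<in> hom L (Unit L) (FO F (Unit C)) \<and>
    mUi F \<in> hom L (FO F (Unit C)) (Unit L) \<and>
    Cmp L (mU F) (mUi F) = Idt L (Unit L) \<and>
    Cmp L (mUi F) (mU F) = Idt L (FO F (Unit C)) \<and>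
    \<comment> \<open>naturality\<close>
    (\<forall>f\<in>Arr C. \<forall>g\<in>Arr C.
        Cmp L (TenA L (FA F f) (FA F g)) (mT F (Cod C f) (Cod C g)) =
        Cmp L (mT F (Dom C f) (Dom C g)) (FA F (TenA C f g))) \<and>
    \<comment> \<open>associativity\<close>
    (\<forall>X\<in>Obj C. \<forall>Y\<in>Obj C. \<forall>Z\<in>Obj C.
        Cmp L (TenA L (mT F X Y) (Idt L (FO F Z))) (mT F (Ten C X Y) Z) =
        Cmp L (TenA L (Idt L (FO F X)) (mT F Y Z)) (mT F X (Ten C Y Z))) \<and>
    \<comment> \<open>unitality\<close>
    (\<forall>X\<in>Obj C.
        Cmp L (TenA L (mU F) (Idt L (FO F X))) (mT F (Unit C) X) = Idt L (FO F X) \<and>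
        Cmp L (TenA L (Idt L (FO F X)) (mU F)) (mT F X (Unit C)) = Idt L (FO F X)) \<and>
    \<comment> \<open>symmetry\<close>
    (\<forall>X\<in>Obj C. \<forall>Y\<in>Obj C.
        Cmp L (mT F X Y) (FA F (csym C X Y)) = Cmp L (Sym L (FO F X) (FO F Y)) (mT F Y X)) \<and>
    \<comment> \<open>adjunction F -| U with unit eta and counit eps\<close>
    (\<forall>X\<in>Obj C. eta F X \<in> hom C X (UO F (FO F X))) \<and>
    (\<forall>A\<in>Obj L. eps F A \<in> hom L (FO F (UO F A)) A) \<and>
    (\<forall>f\<in>Arr C. Cmp C f (eta F (Cod C f)) = Cmp C (eta F (Dom C f)) (UA F (FA F f))) \<and>
    (\<forall>g\<in>Arr L. Cmp L (FA F (UA F g)) (eps F (Cod L g)) = Cmp L (eps F (Dom L g)) g) \<and>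
    (\<forall>X\<in>Obj C. Cmp L (FA F (eta F X)) (eps F (FO F X)) = Idt L (FO F X)) \<and>
    (\<forall>A\<in>Obj L. Cmp C (eta F (UO F A)) (UA F (eps F A)) = Idt C (UO F A))"

definition contr :: "('o,'m,'z1) ccat_scheme \<Rightarrow> ('p,'n,'z2) smcat_scheme \<Rightarrow>
    ('o,'m,'p,'n) lnl_data \<Rightarrow> 'o \<Rightarrow> 'n" where
  "contr C L F X = Cmp L (FA F (diag C X)) (mTi F X X)"

definition weak :: "('o,'m,'z1) ccat_scheme \<Rightarrow> ('p,'n,'z2) smcat_scheme \<Rightarrow>
    ('o,'m,'p,'n) lnl_data \<Rightarrow> 'o \<Rightarrow> 'n" where
  "weak C L F X = Cmp L (FA F (Term C X)) (mUi F)"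

text \<open>A morphism (f,u) : A \<rightarrow> B is represented as the tuple (A, B, f, u).\<close>

definition base_arr :: "'a \<times> 'a \<times> 'm \<times> 'n \<Rightarrow> 'm" where
  "base_arr a = fst (snd (snd a))"

definition SC :: "('o,'m,'z) ccat_scheme \<Rightarrow> ('o \<times> 'o, ('o \<times> 'o) \<times> ('o \<times> 'o) \<times> 'm \<times> 'm) cat" where
  "SC C = \<lparr> Obj = Obj C \<times> Obj C,
     Arr = {((X,J),(Y,K),f,u) | X J Y K f u. X \<in> Obj C \<and> J \<in> Obj C \<and> Y \<in> Obj C \<and> K \<in> Obj C \<and>
              f \<in> hom C X Y \<and> u \<in> hom C (Ten C X J) K},
     Dom = (\<lambda>(A,B,f,u). A),
     Cod = (\<lambda>(A,B,f,u). B),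
     Idt = (\<lambda>(X,J). ((X,J),(X,J), Idt C X, Pr2 C X J)),
     Cmp = (\<lambda>(A,B,f,u) (B',D,g,v). (A, D, Cmp C f g,
              Cmp C (Cmp C (TenA C (diag C (fst A)) (Idt C (snd A))) (TenA C f u)) v)) \<rparr>"

definition LSC :: "('o,'m,'z1) ccat_scheme \<Rightarrow> ('p,'n,'z2) smcat_scheme \<Rightarrow> ('o,'m,'p,'n) lnl_data \<Rightarrow>
    ('o \<times> 'p, ('o \<times> 'p) \<times> ('o \<times> 'p) \<times> 'm \<times> 'n) cat" where
  "LSC C L F = \<lparr> Obj = Obj C \<times> Obj L,
     Arr = {((X,A),(Y,B),f,u) | X A Y B f u. X \<in> Obj C \<and> A \<in> Obj L \<and> Y \<in> Obj C \<and> B \<in> Obj L \<and>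
              f \<in> hom C X Y \<and> u \<in> hom L (Ten L (FO F X) A) B},
     Dom = (\<lambda>(P,Q,f,u). P),
     Cod = (\<lambda>(P,Q,f,u). Q),
     Idt = (\<lambda>(X,A). ((X,A),(X,A), Idt C X, TenA L (weak C L F X) (Idt L A))),
     Cmp = (\<lambda>(P,Q,f,u) (Q',R,g,v). (P, R, Cmp C f g,
              Cmp L (Cmp L (TenA L (contr C L F (fst P)) (Idt L (snd P))) (TenA L (FA F f) u)) v)) \<rparr>"

text \<open>Chosen cartesian morphisms of the split fibrations s and ls\<close>
definition cartS :: "('o,'m,'z) ccat_scheme \<Rightarrow> 'm \<Rightarrow> 'o \<Rightarrow> ('o \<times> 'o) \<times> ('o \<times> 'o) \<times> 'm \<times> 'm" where
  "cartS C f K = ((Dom C f, K), (Cod C f, K), f, Pr2 C (Dom C f) K)"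

definition cartLS :: "('o,'m,'z1) ccat_scheme \<Rightarrow> ('p,'n,'z2) smcat_scheme \<Rightarrow> ('o,'m,'p,'n) lnl_data \<Rightarrow>
    'm \<Rightarrow> 'p \<Rightarrow> ('o \<times> 'p) \<times> ('o \<times> 'p) \<times> 'm \<times> 'n" where
  "cartLS C L F f B = ((Dom C f, B), (Cod C f, B), f, TenA L (weak C L F (Dom C f)) (Idt L B))"

definition fibS :: "('o,'m,'z) ccat_scheme \<Rightarrow> 'o \<Rightarrow>
    ('o \<times> 'o, ('o \<times> 'o) \<times> ('o \<times> 'o) \<times> 'm \<times> 'm) smcat" where
  "fibS C X = \<lparr> Obj = {X} \<times> Obj C,
     Arr = {a \<in> Arr (SC C). fst (Dom (SC C) a) = X \<and> fst (Cod (SC C) a) = X \<and> base_arr a = Idt C X},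
     Dom = Dom (SC C), Cod = Cod (SC C), Idt = Idt (SC C), Cmp = Cmp (SC C),
     Ten = (\<lambda>(X1,J) (X2,K). (X, Ten C J K)),
     TenA = (\<lambda>(A,B,f,u) (A',B',g,v). ((X, Ten C (snd A) (snd A')), (X, Ten C (snd B) (snd B')), Idt C X,
              Cmp C (Cmp C (TenA C (diag C X) (Idt C (Ten C (snd A) (snd A'))))
                           (TenA C (TenA C (Idt C X) (csym C X (snd A))) (Idt C (snd A'))))
                    (TenA C u v))),
     Unit = (X, Unit C),
     Sym = (\<lambda>(X1,J) (X2,K). ((X, Ten C J K), (X, Ten C K J), Idt C X,
              Cmp C (Pr2 C X (Ten C J K)) (csym C J K))) \<rparr>"

definition fibLS :: "('o,'m,'z1) ccat_scheme \<Rightarrow> ('p,'n,'z2) smcat_scheme \<Rightarrow> ('o,'m,'p,'n) lnl_data \<Rightarrow> 'o \<Rightarrow>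
    ('o \<times> 'p, ('o \<times> 'p) \<times> ('o \<times> 'p) \<times> 'm \<times> 'n) smcat" where
  "fibLS C L F X = \<lparr> Obj = {X} \<times> Obj L,
     Arr = {a \<in> Arr (LSC C L F). fst (Dom (LSC C L F) a) = X \<and> fst (Cod (LSC C L F) a) = X \<and>
              base_arr a = Idt C X},
     Dom = Dom (LSC C L F), Cod = Cod (LSC C L F), Idt = Idt (LSC C L F), Cmp = Cmp (LSC C L F),
     Ten = (\<lambda>(X1,A) (X2,B). (X, Ten L A B)),
     TenA = (\<lambda>(P,Q,f,u) (P',Q',g,v). ((X, Ten L (snd P) (snd P')), (X, Ten L (snd Q) (snd Q')), Idt C X,
              Cmp L (Cmp L (TenA L (contr C L F X) (Idt L (Ten L (snd P) (snd P'))))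
                           (TenA L (TenA L (Idt L (FO F X)) (Sym L (FO F X) (snd P))) (Idt L (snd P'))))
                    (TenA L u v))),
     Unit = (X, Unit L),
     Sym = (\<lambda>(X1,A) (X2,B). ((X, Ten L A B), (X, Ten L B A), Idt C X,
              TenA L (weak C L F X) (Sym L A B))) \<rparr>"

definition FSo :: "('o,'m,'p,'n) lnl_data \<Rightarrow> 'o \<times> 'o \<Rightarrow> 'o \<times> 'p" where
  "FSo F = (\<lambda>(X,J). (X, FO F J))"

definition FSm :: "('p,'n,'z) smcat_scheme \<Rightarrow> ('o,'m,'p,'n) lnl_data \<Rightarrow>
    ('o \<times> 'o) \<times> ('o \<times> 'o) \<times> 'm \<times> 'm \<Rightarrow> ('o \<times> 'p) \<times> ('o \<times> 'p) \<times> 'm \<times> 'n" where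
  "FSm L F = (\<lambda>((X,J),(Y,K),f,u). ((X, FO F J), (Y, FO F K), f, Cmp L (mT F X J) (FA F u)))"

definition FS_unit :: "('o,'m,'z1) ccat_scheme \<Rightarrow> ('p,'n,'z2) smcat_scheme \<Rightarrow> ('o,'m,'p,'n) lnl_data \<Rightarrow>
    'o \<Rightarrow> ('o \<times> 'p) \<times> ('o \<times> 'p) \<times> 'm \<times> 'n" where
  "FS_unit C L F X = ((X, Unit L), (X, FO F (Unit C)), Idt C X,
      Cmp L (TenA L (weak C L F X) (Idt L (Unit L))) (mU F))"

definition FS_tensor :: "('o,'m,'z1) ccat_scheme \<Rightarrow> ('p,'n,'z2) smcat_scheme \<Rightarrow> ('o,'m,'p,'n) lnl_data \<Rightarrow>
    'o \<Rightarrow> 'o \<times> 'o \<Rightarrow> 'o \<times> 'o \<Rightarrow> ('o \<times> 'p) \<times> ('o \<times> 'p) \<times> 'm \<times> 'n" where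
  "FS_tensor C L F X = (\<lambda>(X1,J) (X2,K). ((X, Ten L (FO F J) (FO F K)), (X, FO F (Ten C J K)), Idt C X,
      Cmp L (TenA L (weak C L F X) (Idt L (Ten L (FO F J) (FO F K)))) (mT F J K)))"

end

theory Submission
  imports Defs
begin

locale lnl =
  fixes C :: "('o,'m,'z1) ccat_scheme" and L :: "('p,'n,'z2) smcat_scheme"
    and F :: "('o,'m,'p,'n) lnl_data"
  assumes lnl: "lnl_adjunction C L F"
begin

abbreviation cmpL (infixl ";;" 55) where "f ;; g \<equiv> Cmp L f g"
abbreviation tenAL (infixl "**" 65) where "f ** g \<equiv> TenA L f g"
abbreviation tenL (infixl "\<otimes>" 65) where "A \<otimes> B \<equiv> Ten L A B"
abbreviation cmpC (infixl ";c" 55) where "f ;c g \<equiv> Cmp C f g"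
abbreviation tenAC (infixl "*c" 65) where "f *c g \<equiv> TenA C f g"
abbreviation tenC (infixl "\<times>c" 65) where "A \<times>c B \<equiv> Ten C A B"
abbreviation "ob A \<equiv> A \<in> Obj L"
abbreviation "ar f \<equiv> f \<in> Arr L"
abbreviation "dm \<equiv> Dom L"
abbreviation "cd \<equiv> Cod L"
abbreviation "idL \<equiv> Idt L"
abbreviation "obC A \<equiv> A \<in> Obj C"
abbreviation "arC f \<equiv> f \<in> Arr C"
abbreviation "dmC \<equiv> Dom C"
abbreviation "cdC \<equiv> Cod C"
abbreviation "idC \<equiv> Idt C"
abbreviation "I \<equiv> Unit C"
abbreviation "U \<equiv> Unit L"
abbreviation "FO' \<equiv> FO F"
abbreviation "FA' \<equiv> FA F"
abbreviation "w X \<equiv> weak C L F X"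
abbreviation "cc X \<equiv> contr C L F X"

lemma cartC: "cartesian C" and symL: "symmetric L" and monC: "monoidal C" and monL: "monoidal L"
  and catC: "category C" and catL: "category L"
  using lnl unfolding lnl_adjunction_def cartesian_def symmetric_def monoidal_def by auto

lemma funF: "functor C L FO' FA'" using lnl unfolding lnl_adjunction_def by auto

named_theorems ty
named_theorems nrm

lemma L_dm_ob[ty]: "ar f \<Longrightarrow> ob (dm f)" and L_cd_ob[ty]: "ar f \<Longrightarrow> ob (cd f)"
  using catL unfolding category_def by auto
lemma L_id[ty]: "ob A \<Longrightarrow> ar (idL A)" "ob A \<Longrightarrow> dm (idL A) = A" "ob A \<Longrightarrow> cd (idL A) = A"
  using catL unfolding category_def hom_def by auto
lemma L_cmp[ty]: "ar f \<Longrightarrow> ar g \<Longrightarrow> cd f = dm g \<Longrightarrow> ar (f;;g)"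
  "ar f \<Longrightarrow> ar g \<Longrightarrow> cd f = dm g \<Longrightarrow> dm (f;;g) = dm f"
  "ar f \<Longrightarrow> ar g \<Longrightarrow> cd f = dm g \<Longrightarrow> cd (f;;g) = cd g"
  using catL unfolding category_def hom_def by auto
lemma L_idl[nrm]: "ar f \<Longrightarrow> dm f = A \<Longrightarrow> idL A ;; f = f"
  and L_idr[nrm]: "ar f \<Longrightarrow> cd f = A \<Longrightarrow> f ;; idL A = f"
  using catL unfolding category_def by auto
lemma L_assoc[nrm]: "ar f \<Longrightarrow> ar g \<Longrightarrow> ar h \<Longrightarrow> cd f = dm g \<Longrightarrow> cd g = dm h \<Longrightarrow> f;;g;;h = f;;(g;;h)"
  using catL unfolding category_def by auto

lemma L_U[ty]: "ob U" and L_ten_ob[ty]: "ob A \<Longrightarrow> ob B \<Longrightarrow> ob (A \<otimes> B)"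
  using monL unfolding monoidal_def by auto
lemma L_tenA[ty]: "ar f \<Longrightarrow> ar g \<Longrightarrow> ar (f ** g)"
  "ar f \<Longrightarrow> ar g \<Longrightarrow> dm (f ** g) = dm f \<otimes> dm g"
  "ar f \<Longrightarrow> ar g \<Longrightarrow> cd (f ** g) = cd f \<otimes> cd g"
  using monL unfolding monoidal_def hom_def by auto
lemma L_ten_id[nrm]: "ob A \<Longrightarrow> ob B \<Longrightarrow> idL A ** idL B = idL (A \<otimes> B)"
  using monL unfolding monoidal_def by auto
lemma L_interchange: "ar f \<Longrightarrow> ar g \<Longrightarrow> ar f' \<Longrightarrow> ar g' \<Longrightarrow> cd f = dm g \<Longrightarrow> cd f' = dm g' \<Longrightarrow>
   (f;;g) ** (f';;g') = (f ** f') ;; (g ** g')"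
  using monL unfolding monoidal_def by auto
lemma L_ten_assoc[ty]: "ob A \<Longrightarrow> ob B \<Longrightarrow> ob D \<Longrightarrow> A \<otimes> B \<otimes> D = A \<otimes> (B \<otimes> D)"
  using monL unfolding monoidal_def by auto
lemma L_tenA_assoc[nrm]: "ar f \<Longrightarrow> ar g \<Longrightarrow> ar h \<Longrightarrow> f ** g ** h = f ** (g ** h)"
  using monL unfolding monoidal_def by auto
lemma L_unit_ob[ty]: "ob A \<Longrightarrow> U \<otimes> A = A" "ob A \<Longrightarrow> A \<otimes> U = A"
  using monL unfolding monoidal_def by auto
lemma L_unit_ar[nrm]: "ar f \<Longrightarrow> idL U ** f = f" "ar f \<Longrightarrow> f ** idL U = f"
  using monL unfolding monoidal_def by auto

lemma L_sym[ty]: "ob A \<Longrightarrow> ob B \<Longrightarrow> ar (Sym L A B)"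
  "ob A \<Longrightarrow> ob B \<Longrightarrow> dm (Sym L A B) = A \<otimes> B"
  "ob A \<Longrightarrow> ob B \<Longrightarrow> cd (Sym L A B) = B \<otimes> A"
  using symL unfolding symmetric_def hom_def by auto
lemma L_sym_nat: "ar f \<Longrightarrow> ar g \<Longrightarrow> (f ** g) ;; Sym L (cd f) (cd g) = Sym L (dm f) (dm g) ;; (g ** f)"
  using symL unfolding symmetric_def by auto
lemma L_sym_inv: "ob A \<Longrightarrow> ob B \<Longrightarrow> Sym L A B ;; Sym L B A = idL (A \<otimes> B)"
  using symL unfolding symmetric_def by auto
lemma L_sym_hex: "ob A \<Longrightarrow> ob B \<Longrightarrow> ob D \<Longrightarrow>
   Sym L A (B \<otimes> D) = (Sym L A B ** idL D) ;; (idL B ** Sym L A D)"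
  using symL unfolding symmetric_def by auto

lemma C_dm_ob[ty]: "arC f \<Longrightarrow> obC (dmC f)" and C_cd_ob[ty]: "arC f \<Longrightarrow> obC (cdC f)"
  using catC unfolding category_def by auto
lemma C_id[ty]: "obC A \<Longrightarrow> arC (idC A)" "obC A \<Longrightarrow> dmC (idC A) = A" "obC A \<Longrightarrow> cdC (idC A) = A"
  using catC unfolding category_def hom_def by auto
lemma C_cmp[ty]: "arC f \<Longrightarrow> arC g \<Longrightarrow> cdC f = dmC g \<Longrightarrow> arC (f;c g)"
  "arC f \<Longrightarrow> arC g \<Longrightarrow> cdC f = dmC g \<Longrightarrow> dmC (f;c g) = dmC f"
  "arC f \<Longrightarrow> arC g \<Longrightarrow> cdC f = dmC g \<Longrightarrow> cdC (f;c g) = cdC g"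
  using catC unfolding category_def hom_def by auto
lemma C_idl[nrm]: "arC f \<Longrightarrow> dmC f = A \<Longrightarrow> idC A ;c f = f"
  and C_idr[nrm]: "arC f \<Longrightarrow> cdC f = A \<Longrightarrow> f ;c idC A = f"
  using catC unfolding category_def by auto
lemma C_assoc[nrm]: "arC f \<Longrightarrow> arC g \<Longrightarrow> arC h \<Longrightarrow> cdC f = dmC g \<Longrightarrow> cdC g = dmC h \<Longrightarrow> f;c g;c h = f;c (g;c h)"
  using catC unfolding category_def by auto
lemma C_U[ty]: "obC I" and C_ten_ob[ty]: "obC A \<Longrightarrow> obC B \<Longrightarrow> obC (A \<times>c B)"
  using monC unfolding monoidal_def by auto
lemma C_tenA[ty]: "arC f \<Longrightarrow> arC g \<Longrightarrow> arC (f *c g)"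
  "arC f \<Longrightarrow> arC g \<Longrightarrow> dmC (f *c g) = dmC f \<times>c dmC g"
  "arC f \<Longrightarrow> arC g \<Longrightarrow> cdC (f *c g) = cdC f \<times>c cdC g"
  using monC unfolding monoidal_def hom_def by auto
lemma C_ten_id[nrm]: "obC A \<Longrightarrow> obC B \<Longrightarrow> idC A *c idC B = idC (A \<times>c B)"
  using monC unfolding monoidal_def by auto
lemma C_interchange: "arC f \<Longrightarrow> arC g \<Longrightarrow> arC f' \<Longrightarrow> arC g' \<Longrightarrow> cdC f = dmC g \<Longrightarrow> cdC f' = dmC g' \<Longrightarrow>
   (f;c g) *c (f';c g') = (f *c f') ;c (g *c g')"
  using monC unfolding monoidal_def by auto
lemma C_ten_assoc[ty]: "obC A \<Longrightarrow> obC B \<Longrightarrow> obC D \<Longrightarrow> A \<times>c B \<times>c D = A \<times>c (B \<times>c D)"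
  using monC unfolding monoidal_def by auto
lemma C_tenA_assoc[nrm]: "arC f \<Longrightarrow> arC g \<Longrightarrow> arC h \<Longrightarrow> f *c g *c h = f *c (g *c h)"
  using monC unfolding monoidal_def by auto
lemma C_unit_ob[ty]: "obC A \<Longrightarrow> I \<times>c A = A" "obC A \<Longrightarrow> A \<times>c I = A"
  using monC unfolding monoidal_def by auto
lemma C_unit_ar[nrm]: "arC f \<Longrightarrow> idC I *c f = f" "arC f \<Longrightarrow> f *c idC I = f"
  using monC unfolding monoidal_def by auto

lemma C_pr[ty]: "obC A \<Longrightarrow> obC B \<Longrightarrow> arC (Pr1 C A B)" "obC A \<Longrightarrow> obC B \<Longrightarrow> dmC (Pr1 C A B) = A \<times>c B"
  "obC A \<Longrightarrow> obC B \<Longrightarrow> cdC (Pr1 C A B) = A"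
  "obC A \<Longrightarrow> obC B \<Longrightarrow> arC (Pr2 C A B)" "obC A \<Longrightarrow> obC B \<Longrightarrow> dmC (Pr2 C A B) = A \<times>c B"
  "obC A \<Longrightarrow> obC B \<Longrightarrow> cdC (Pr2 C A B) = B"
  using cartC unfolding cartesian_def hom_def by auto
lemma C_pair[ty]: "arC f \<Longrightarrow> arC g \<Longrightarrow> dmC f = dmC g \<Longrightarrow> arC (Pair C f g)"
  "arC f \<Longrightarrow> arC g \<Longrightarrow> dmC f = dmC g \<Longrightarrow> dmC (Pair C f g) = dmC f"
  "arC f \<Longrightarrow> arC g \<Longrightarrow> dmC f = dmC g \<Longrightarrow> cdC (Pair C f g) = cdC f \<times>c cdC g"
  using cartC unfolding cartesian_def hom_def by auto
lemma C_pair_pr: "arC f \<Longrightarrow> arC g \<Longrightarrow> dmC f = dmC g \<Longrightarrow> A = cdC f \<Longrightarrow> B = cdC g \<Longrightarrow> Pair C f g ;c Pr1 C A B = f"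
  "arC f \<Longrightarrow> arC g \<Longrightarrow> dmC f = dmC g \<Longrightarrow> A = cdC f \<Longrightarrow> B = cdC g \<Longrightarrow> Pair C f g ;c Pr2 C A B = g"
  using cartC unfolding cartesian_def by auto
lemma C_term[ty]: "obC A \<Longrightarrow> arC (Term C A)" "obC A \<Longrightarrow> dmC (Term C A) = A" "obC A \<Longrightarrow> cdC (Term C A) = I"
  using cartC unfolding cartesian_def hom_def by auto
lemma C_pr_nat: "arC f \<Longrightarrow> arC g \<Longrightarrow> (f *c g) ;c Pr1 C (cdC f) (cdC g) = Pr1 C (dmC f) (dmC g) ;c f"
  "arC f \<Longrightarrow> arC g \<Longrightarrow> (f *c g) ;c Pr2 C (cdC f) (cdC g) = Pr2 C (dmC f) (dmC g) ;c g"
  using cartC unfolding cartesian_def by auto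
lemma C_pr_unit: "obC A \<Longrightarrow> Pr1 C A I = idC A" "obC A \<Longrightarrow> Pr2 C I A = idC A"
  using cartC unfolding cartesian_def by auto

lemma diag_ty[ty]: "obC X \<Longrightarrow> arC (diag C X)" "obC X \<Longrightarrow> dmC (diag C X) = X" "obC X \<Longrightarrow> cdC (diag C X) = X \<times>c X"
  unfolding diag_def by (simp_all add: ty)
lemma csym_ty[ty]: "obC X \<Longrightarrow> obC Y \<Longrightarrow> arC (csym C X Y)" "obC X \<Longrightarrow> obC Y \<Longrightarrow> dmC (csym C X Y) = X \<times>c Y"
  "obC X \<Longrightarrow> obC Y \<Longrightarrow> cdC (csym C X Y) = Y \<times>c X"
  unfolding csym_def by (simp_all add: ty)

lemma FO_ob[ty]: "obC X \<Longrightarrow> ob (FO' X)" using funF unfolding functor_def by auto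
lemma FA_ty[ty]: "arC f \<Longrightarrow> ar (FA' f)" "arC f \<Longrightarrow> dm (FA' f) = FO' (dmC f)" "arC f \<Longrightarrow> cd (FA' f) = FO' (cdC f)"
  using funF unfolding functor_def hom_def by auto
lemma FA_id[nrm]: "obC X \<Longrightarrow> FA' (idC X) = idL (FO' X)" using funF unfolding functor_def by auto
lemma FA_cmp: "arC f \<Longrightarrow> arC g \<Longrightarrow> cdC f = dmC g \<Longrightarrow> FA' (f ;c g) = FA' f ;; FA' g"
  using funF unfolding functor_def by auto

lemma mT_ty[ty]: "obC X \<Longrightarrow> obC Y \<Longrightarrow> ar (mT F X Y)"
  "obC X \<Longrightarrow> obC Y \<Longrightarrow> dm (mT F X Y) = FO' X \<otimes> FO' Y"
  "obC X \<Longrightarrow> obC Y \<Longrightarrow> cd (mT F X Y) = FO' (X \<times>c Y)"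
  "obC X \<Longrightarrow> obC Y \<Longrightarrow> ar (mTi F X Y)"
  "obC X \<Longrightarrow> obC Y \<Longrightarrow> cd (mTi F X Y) = FO' X \<otimes> FO' Y"
  "obC X \<Longrightarrow> obC Y \<Longrightarrow> dm (mTi F X Y) = FO' (X \<times>c Y)"
  using lnl unfolding lnl_adjunction_def hom_def by auto
lemma mT_inv: "obC X \<Longrightarrow> obC Y \<Longrightarrow> mT F X Y ;; mTi F X Y = idL (FO' X \<otimes> FO' Y)"
  "obC X \<Longrightarrow> obC Y \<Longrightarrow> mTi F X Y ;; mT F X Y = idL (FO' (X \<times>c Y))"
  using lnl unfolding lnl_adjunction_def by auto
lemma mU_ty[ty]: "ar (mU F)" "dm (mU F) = U" "cd (mU F) = FO' I" "ar (mUi F)" "cd (mUi F) = U" "dm (mUi F) = FO' I"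
  using lnl unfolding lnl_adjunction_def hom_def by auto
lemma mU_inv: "mU F ;; mUi F = idL U" "mUi F ;; mU F = idL (FO' I)"
  using lnl unfolding lnl_adjunction_def by auto
lemma mT_nat: "arC f \<Longrightarrow> arC g \<Longrightarrow> (FA' f ** FA' g) ;; mT F (cdC f) (cdC g) = mT F (dmC f) (dmC g) ;; FA' (f *c g)"
  using lnl unfolding lnl_adjunction_def by auto
lemma mT_assoc: "obC X \<Longrightarrow> obC Y \<Longrightarrow> obC Z \<Longrightarrow>
  (mT F X Y ** idL (FO' Z)) ;; mT F (X \<times>c Y) Z = (idL (FO' X) ** mT F Y Z) ;; mT F X (Y \<times>c Z)"
  using lnl unfolding lnl_adjunction_def by auto
lemma mT_unit: "obC X \<Longrightarrow> (mU F ** idL (FO' X)) ;; mT F I X = idL (FO' X)"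
  "obC X \<Longrightarrow> (idL (FO' X) ** mU F) ;; mT F X I = idL (FO' X)"
  using lnl unfolding lnl_adjunction_def by auto
lemma mT_sym: "obC X \<Longrightarrow> obC Y \<Longrightarrow> mT F X Y ;; FA' (csym C X Y) = Sym L (FO' X) (FO' Y) ;; mT F Y X"
  using lnl unfolding lnl_adjunction_def by auto

lemma w_ty[ty]: "obC X \<Longrightarrow> ar (w X)" "obC X \<Longrightarrow> dm (w X) = FO' X" "obC X \<Longrightarrow> cd (w X) = U"
  unfolding weak_def by (simp_all add: ty)
lemma cc_ty[ty]: "obC X \<Longrightarrow> ar (cc X)" "obC X \<Longrightarrow> dm (cc X) = FO' X" "obC X \<Longrightarrow> cd (cc X) = FO' X \<otimes> FO' X"
  unfolding contr_def by (simp_all add: ty)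

end

context lnl begin

lemma L_merge: "ar f \<Longrightarrow> ar g \<Longrightarrow> ar f' \<Longrightarrow> ar g' \<Longrightarrow> cd f = dm g \<Longrightarrow> cd f' = dm g' \<Longrightarrow>
   (f ** f') ;; (g ** g') = (f;;g) ** (f';;g')"
  by (simp add: L_interchange)
lemma L_merge_ctx: "ar f \<Longrightarrow> ar g \<Longrightarrow> ar f' \<Longrightarrow> ar g' \<Longrightarrow> ar h \<Longrightarrow> cd f = dm g \<Longrightarrow> cd f' = dm g' \<Longrightarrow>
   cd g \<otimes> cd g' = dm h \<Longrightarrow>
   (f ** f') ;; ((g ** g') ;; h) = ((f;;g) ** (f';;g')) ;; h"
  by (simp add: L_interchange ty nrm)
lemma ctx: "ar f \<Longrightarrow> ar g \<Longrightarrow> ar h \<Longrightarrow> cd f = dm g \<Longrightarrow> cd g = dm h \<Longrightarrow> f ;; g = k \<Longrightarrow> f ;; (g ;; h) = k ;; h"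
  by (metis L_assoc)
lemma FA_merge: "arC f \<Longrightarrow> arC g \<Longrightarrow> cdC f = dmC g \<Longrightarrow> FA' f ;; FA' g = FA' (f ;c g)"
  by (simp add: FA_cmp)
lemma FA_merge_ctx: "arC f \<Longrightarrow> arC g \<Longrightarrow> ar h \<Longrightarrow> cdC f = dmC g \<Longrightarrow> FO' (cdC g) = dm h \<Longrightarrow> FA' f ;; (FA' g ;; h) = FA' (f ;c g) ;; h"
  by (simp add: FA_cmp ty nrm)

lemma mT_unitL: "obC J \<Longrightarrow> mT F I J = mUi F ** idL (FO' J)"
proof -
  assume J: "obC J"
  have "mUi F ** idL (FO' J) = (mUi F ** idL (FO' J)) ;; ((mU F ** idL (FO' J)) ;; mT F I J)"
    using J by (simp add: mT_unit ty nrm)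
  also have "\<dots> = mT F I J" using J by (simp add: L_merge_ctx mU_inv ty nrm)
  finally show ?thesis by simp
qed

lemma mT_unitR: "obC J \<Longrightarrow> mT F J I = idL (FO' J) ** mUi F"
proof -
  assume J: "obC J"
  have "idL (FO' J) ** mUi F = (idL (FO' J) ** mUi F) ;; ((idL (FO' J) ** mU F) ;; mT F J I)"
    using J by (simp add: mT_unit ty nrm)
  also have "\<dots> = mT F J I" using J by (simp add: L_merge_ctx mU_inv ty nrm)
  finally show ?thesis by simp
qed

lemma C_pr2_term: "obC X \<Longrightarrow> obC J \<Longrightarrow> Pr2 C X J = Term C X *c idC J"
  using C_pr_nat(2)[of "Term C X" "idC J"] by (simp add: ty nrm C_pr_unit)
lemma C_pr1_term: "obC X \<Longrightarrow> obC J \<Longrightarrow> Pr1 C X J = idC X *c Term C J"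
  using C_pr_nat(1)[of "idC X" "Term C J"] by (simp add: ty nrm C_pr_unit)
lemma C_diag_pr: "obC X \<Longrightarrow> diag C X ;c Pr1 C X X = idC X" "obC X \<Longrightarrow> diag C X ;c Pr2 C X X = idC X"
  unfolding diag_def by (simp_all add: C_pair_pr ty)

lemma mT_pr2: "obC X \<Longrightarrow> obC J \<Longrightarrow> mT F X J ;; FA' (Pr2 C X J) = w X ** idL (FO' J)"
  using mT_nat[of "Term C X" "idC J"]
  by (simp add: C_pr2_term ty nrm mT_unitL L_merge weak_def)
lemma mT_pr1: "obC X \<Longrightarrow> obC J \<Longrightarrow> mT F X J ;; FA' (Pr1 C X J) = idL (FO' X) ** w J"
  using mT_nat[of "idC X" "Term C J"]
  by (simp add: C_pr1_term ty nrm mT_unitR L_merge weak_def)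

lemma counitR: "obC X \<Longrightarrow> cc X ;; (w X ** idL (FO' X)) = idL (FO' X)"
proof -
  assume X: "obC X"
  have "cc X ;; (w X ** idL (FO' X)) = FA' (diag C X) ;; (mTi F X X ;; (mT F X X ;; FA' (Pr2 C X X)))"
    using X by (simp add: contr_def mT_pr2 ty nrm)
  also have "\<dots> = idL (FO' X)"
    using X by (simp add: ctx mT_inv ty nrm FA_merge C_diag_pr)
  finally show ?thesis .
qed
lemma counitL: "obC X \<Longrightarrow> cc X ;; (idL (FO' X) ** w X) = idL (FO' X)"
proof -
  assume X: "obC X"
  have "cc X ;; (idL (FO' X) ** w X) = FA' (diag C X) ;; (mTi F X X ;; (mT F X X ;; FA' (Pr1 C X X)))"
    using X by (simp add: contr_def mT_pr1 ty nrm)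
  also have "\<dots> = idL (FO' X)"
    using X by (simp add: ctx mT_inv ty nrm FA_merge C_diag_pr)
  finally show ?thesis .
qed


lemma sym_unit: "ob A \<Longrightarrow> Sym L A U = idL A" "ob A \<Longrightarrow> Sym L U A = idL A"
proof -
  assume A: "ob A"
  let ?s = "Sym L A U" and ?t = "Sym L U A"
  have h: "?s = ?s ;; ?s" using L_sym_hex[of A U U] A by (simp add: ty nrm)
  have i: "?s ;; ?t = idL A" using L_sym_inv[of A U] A by (simp add: ty)
  have "?s = ?s ;; (?s ;; ?t)" using A by (simp add: i ty nrm)
  also have "\<dots> = (?s ;; ?s) ;; ?t" by (rule L_assoc[symmetric]) (simp_all add: A ty)
  also have "\<dots> = idL A" using h i by simp
  finally show s: "?s = idL A" .
  show "?t = idL A" using i A by (simp add: s ty nrm)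
qed

lemma cc_ww: "obC X \<Longrightarrow> cc X ;; (w X ** w X) = w X"
proof -
  assume X: "obC X"
  have "w X ** w X = (w X ** idL (FO' X)) ;; w X"
    using L_interchange[of "w X" "idL U" "idL (FO' X)" "w X"] X by (simp add: ty nrm)
  then have "cc X ;; (w X ** w X) = (cc X ;; (w X ** idL (FO' X))) ;; w X"
    using X by (simp add: ty nrm)
  then show ?thesis using X by (simp add: counitR ty nrm)
qed

lemma liftR: "obC X \<Longrightarrow> ob A \<Longrightarrow> ar a \<Longrightarrow> dm a = FO' X \<otimes> A \<Longrightarrow> ar h \<Longrightarrow> dm h = cd a \<Longrightarrow>
  cc X ** idL A ;; (idL (FO' X) ** a) ;; (w X ** h) = a ;; h"
proof -
  assume X: "obC X" and A: "ob A" and a: "ar a" "dm a = FO' X \<otimes> A" and h: "ar h" "dm h = cd a"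
  have "w X ** (a ;; h) = (w X ;; idL U) ** (idL (FO' X \<otimes> A) ;; (a ;; h))"
    using X A a h by (simp add: ty nrm)
  also have "\<dots> = (w X ** idL (FO' X \<otimes> A)) ;; (idL U ** (a ;; h))"
    by (rule L_interchange) (use X A a h in \<open>simp_all add: ty nrm\<close>)
  finally have e1: "w X ** (a ;; h) = (w X ** idL (FO' X) ** idL A) ;; (a ;; h)"
    using X A a h by (simp add: ty nrm)
  have "cc X ** idL A ;; (idL (FO' X) ** a) ;; (w X ** h) = cc X ** idL A ;; (w X ** (a ;; h))"
    using X A a h by (simp add: ty nrm L_merge)
  also have "\<dots> = cc X ** idL A ;; ((w X ** idL (FO' X) ** idL A) ;; (a ;; h))"
    by (simp only: e1)
  also have "\<dots> = a ;; h"
    by (subst L_merge_ctx) (use X A a h in \<open>simp_all add: ty nrm counitR\<close>)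
  finally show ?thesis .
qed

lemma liftL: "obC X \<Longrightarrow> ob B \<Longrightarrow> ar h \<Longrightarrow> dm h = B \<Longrightarrow> ar a \<Longrightarrow> dm a = FO' X \<otimes> cd h \<Longrightarrow>
  cc X ** idL B ;; (idL (FO' X) ** (w X ** h)) ;; a = (idL (FO' X) ** h) ;; a"
proof -
  assume X: "obC X" and B: "ob B" and a: "ar a" "dm a = FO' X \<otimes> cd h" and h: "ar h" "dm h = B"
  have e: "idL (FO' X) ** (w X ** h) = (idL (FO' X) ** w X) ** h"
    using X h by (simp add: ty nrm)
  have "cc X ** idL B ;; (idL (FO' X) ** (w X ** h)) ;; a = cc X ** idL B ;; ((idL (FO' X) ** (w X ** h)) ;; a)"
    using X B a h by (simp add: ty nrm)
  also have "\<dots> = cc X ** idL B ;; (((idL (FO' X) ** w X) ** h) ;; a)" by (simp only: e)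
  also have "\<dots> = (idL (FO' X) ** h) ;; a"
    by (subst L_merge_ctx) (use X B a h in \<open>simp_all add: ty nrm counitL\<close>)
  finally show ?thesis .
qed

lemma liftT: "obC X \<Longrightarrow> ob A \<Longrightarrow> ob A' \<Longrightarrow> ar h \<Longrightarrow> dm h = A \<Longrightarrow> ar k \<Longrightarrow> dm k = A' \<Longrightarrow>
  cc X ** idL (A \<otimes> A') ;; ((idL (FO' X) ** Sym L (FO' X) A) ** idL A') ;; ((w X ** h) ** (w X ** k))
   = w X ** (h ** k)"
proof -
  assume X: "obC X" and A: "ob A" "ob A'" and h: "ar h" "dm h = A" and k: "ar k" "dm k = A'"
  have n: "Sym L (FO' X) A ;; (h ** w X) = w X ** h"
    using L_sym_nat[of "w X" h] X A h by (simp add: ty nrm sym_unit)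
  have e2: "(Sym L (FO' X) A ;; (h ** w X)) ** k = (Sym L (FO' X) A ** idL A') ;; (h ** (w X ** k))"
    using L_interchange[of "Sym L (FO' X) A" "h ** w X" "idL A'" k] X A h k by (simp add: ty nrm)
  have "((idL (FO' X) ** Sym L (FO' X) A) ** idL A') ;; ((w X ** h) ** (w X ** k))
      = w X ** ((Sym L (FO' X) A ** idL A') ;; (h ** (w X ** k)))"
    using X A h k by (simp add: ty nrm L_merge)
  also have "\<dots> = (w X ** w X) ** (h ** k)" using X A h k by (simp add: e2[symmetric] n ty nrm)
  finally have e3: "((idL (FO' X) ** Sym L (FO' X) A) ** idL A') ;; ((w X ** h) ** (w X ** k))
      = (w X ** w X) ** (h ** k)" .
  have "cc X ** idL (A \<otimes> A') ;; ((idL (FO' X) ** Sym L (FO' X) A) ** idL A') ;; ((w X ** h) ** (w X ** k))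
    = cc X ** idL (A \<otimes> A') ;; (((idL (FO' X) ** Sym L (FO' X) A) ** idL A') ;; ((w X ** h) ** (w X ** k)))"
    by (rule L_assoc) (use X A h k in \<open>simp_all add: ty nrm\<close>)
  also have "\<dots> = cc X ** idL (A \<otimes> A') ;; ((w X ** w X) ** (h ** k))" by (simp only: e3)
  also have "\<dots> = w X ** (h ** k)"
    by (subst L_merge) (use X A h k in \<open>simp_all add: ty nrm cc_ww\<close>)
  finally show ?thesis .
qed

end

context lnl begin

lemma L_id_split: "ob A \<Longrightarrow> ob B \<Longrightarrow> ar f \<Longrightarrow> idL (A \<otimes> B) ** f = idL A ** (idL B ** f)"
proof -
  assume "ob A" "ob B" "ar f"
  then have "idL (A \<otimes> B) ** f = (idL A ** idL B) ** f" by (simp add: L_ten_id)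
  also have "\<dots> = idL A ** (idL B ** f)" by (rule L_tenA_assoc) (use \<open>ob A\<close> \<open>ob B\<close> \<open>ar f\<close> in \<open>simp_all add: ty\<close>)
  finally show ?thesis .
qed

lemma ctx2: "f ;; g = f' ;; g' \<Longrightarrow> ar f \<Longrightarrow> ar g \<Longrightarrow> ar f' \<Longrightarrow> ar g' \<Longrightarrow> cd f = dm g \<Longrightarrow> cd f' = dm g' \<Longrightarrow>
   ar h \<Longrightarrow> cd g = dm h \<Longrightarrow> f ;; (g ;; h) = f' ;; (g' ;; h)"
proof -
  assume e: "f ;; g = f' ;; g'" and t: "ar f" "ar g" "ar f'" "ar g'" "cd f = dm g" "cd f' = dm g'" "ar h" "cd g = dm h"
  have "cd g' = cd (f' ;; g')" using t by (simp add: ty)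
  also have "\<dots> = cd (f ;; g)" using e by simp
  also have "\<dots> = cd g" using t by (simp add: ty)
  finally have c: "cd g' = dm h" using t by simp
  have "f ;; (g ;; h) = (f ;; g) ;; h" using t by (simp add: L_assoc)
  also have "\<dots> = (f' ;; g') ;; h" using e by simp
  also have "\<dots> = f' ;; (g' ;; h)" using t c by (simp add: L_assoc)
  finally show ?thesis .
qed

lemma B1: "obC X \<Longrightarrow> obC J \<Longrightarrow> obC K \<Longrightarrow>
  (mT F X J ** mT F X K) ;; mT F (X \<times>c J) (X \<times>c K) =
  (idL (FO' X) ** ((idL (FO' J) ** mT F X K) ;; mT F J (X \<times>c K))) ;; mT F X (J \<times>c (X \<times>c K))"
proof -
  assume X: "obC X" and J: "obC J" and K: "obC K"
  have i1: "mT F X J ** mT F X K = (idL (FO' X \<otimes> FO' J) ** mT F X K) ;; (mT F X J ** idL (FO' (X \<times>c K)))"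
    using L_interchange[of "idL (FO' X \<otimes> FO' J)" "mT F X J" "mT F X K" "idL (FO' (X \<times>c K))"] X J K
    by (simp add: ty nrm)
  have i2: "(mT F X J ** idL (FO' (X \<times>c K))) ;; mT F (X \<times>c J) (X \<times>c K)
     = (idL (FO' X) ** mT F J (X \<times>c K)) ;; mT F X (J \<times>c (X \<times>c K))"
    using mT_assoc[of X J "X \<times>c K"] X J K by (simp add: ty)
  have "(mT F X J ** mT F X K) ;; mT F (X \<times>c J) (X \<times>c K) =
     (idL (FO' X \<otimes> FO' J) ** mT F X K) ;; ((mT F X J ** idL (FO' (X \<times>c K))) ;; mT F (X \<times>c J) (X \<times>c K))"
    unfolding i1 by (rule L_assoc) (use X J K in \<open>simp_all add: ty nrm\<close>)
  also have "\<dots> = (idL (FO' X \<otimes> FO' J) ** mT F X K) ;; ((idL (FO' X) ** mT F J (X \<times>c K)) ;; mT F X (J \<times>c (X \<times>c K)))"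
    by (simp only: i2)
  also have "\<dots> = (idL (FO' X) ** (idL (FO' J) ** mT F X K)) ;; ((idL (FO' X) ** mT F J (X \<times>c K)) ;; mT F X (J \<times>c (X \<times>c K)))"
    using X J K by (simp add: L_id_split ty)
  also have "\<dots> = (idL (FO' X) ** ((idL (FO' J) ** mT F X K) ;; mT F J (X \<times>c K))) ;; mT F X (J \<times>c (X \<times>c K))"
    by (subst L_merge_ctx) (use X J K in \<open>simp_all add: ty nrm\<close>)
  finally show ?thesis .
qed

lemma B2: "obC X \<Longrightarrow> obC J \<Longrightarrow> obC K \<Longrightarrow>
  (Sym L (FO' X) (FO' J) ** idL (FO' K)) ;; ((idL (FO' J) ** mT F X K) ;; mT F J (X \<times>c K)) =
  ((idL (FO' X) ** mT F J K) ;; mT F X (J \<times>c K)) ;; FA' (csym C X J *c idC K)"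
proof -
  assume X: "obC X" and J: "obC J" and K: "obC K"
  have a1: "(idL (FO' J) ** mT F X K) ;; mT F J (X \<times>c K) = (mT F J X ** idL (FO' K)) ;; mT F (J \<times>c X) K"
    using mT_assoc[of J X K] X J K by (simp add: ty)
  have a2: "(idL (FO' X) ** mT F J K) ;; mT F X (J \<times>c K) = (mT F X J ** idL (FO' K)) ;; mT F (X \<times>c J) K"
    using mT_assoc[of X J K] X J K by (simp add: ty)
  have n: "(FA' (csym C X J) ** FA' (idC K)) ;; mT F (J \<times>c X) K = mT F (X \<times>c J) K ;; FA' (csym C X J *c idC K)"
    using mT_nat[of "csym C X J" "idC K"] X J K by (simp add: ty)
  have "(Sym L (FO' X) (FO' J) ** idL (FO' K)) ;; ((idL (FO' J) ** mT F X K) ;; mT F J (X \<times>c K))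
     = ((Sym L (FO' X) (FO' J) ;; mT F J X) ** idL (FO' K)) ;; mT F (J \<times>c X) K"
    unfolding a1 by (subst L_merge_ctx) (use X J K in \<open>simp_all add: ty nrm\<close>)
  also have "\<dots> = ((mT F X J ;; FA' (csym C X J)) ** (idL (FO' K) ;; FA' (idC K))) ;; mT F (J \<times>c X) K"
    using X J K by (simp add: mT_sym ty nrm)
  also have "\<dots> = (mT F X J ** idL (FO' K)) ;; ((FA' (csym C X J) ** FA' (idC K)) ;; mT F (J \<times>c X) K)"
    by (subst L_merge_ctx[symmetric]) (use X J K in \<open>simp_all add: ty\<close>)
  also have "\<dots> = ((idL (FO' X) ** mT F J K) ;; mT F X (J \<times>c K)) ;; FA' (csym C X J *c idC K)"
    unfolding n a2 by (rule L_assoc[symmetric]) (use X J K in \<open>simp_all add: ty nrm\<close>)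
  finally show ?thesis .
qed

lemma B3: "obC X \<Longrightarrow> arC g \<Longrightarrow>
  (idL (FO' X) ** FA' g) ;; mT F X (cdC g) = mT F X (dmC g) ;; FA' (idC X *c g)"
  using mT_nat[of "idC X" g] by (simp add: ty nrm)

lemma B4: "obC X \<Longrightarrow> obC J \<Longrightarrow> obC K \<Longrightarrow>
  cc X ** idL (FO' J \<otimes> FO' K) ;; ((idL (FO' X) ** ((idL (FO' X) ** mT F J K) ;; mT F X (J \<times>c K))) ;; mT F X (X \<times>c (J \<times>c K)))
  = (idL (FO' X) ** mT F J K) ;; (mT F X (J \<times>c K) ;; FA' (diag C X *c idC (J \<times>c K)))"
proof -
  assume X: "obC X" and J: "obC J" and K: "obC K"
  let ?FX = "FO' X" and ?JK = "J \<times>c K"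
  have a: "(idL ?FX ** mT F X ?JK) ;; mT F X (X \<times>c ?JK) = (mT F X X ** idL (FO' ?JK)) ;; mT F (X \<times>c X) ?JK"
    using mT_assoc[of X X ?JK] X J K by (simp add: ty)
  have s: "idL ?FX ** ((idL ?FX ** mT F J K) ;; mT F X ?JK) = (idL (?FX \<otimes> ?FX) ** mT F J K) ;; (idL ?FX ** mT F X ?JK)"
    using L_interchange[of "idL ?FX" "idL ?FX" "idL ?FX ** mT F J K" "mT F X ?JK"] X J K by (simp add: ty nrm L_id_split)
  have i: "cc X ** idL (FO' J \<otimes> FO' K) ;; (idL (?FX \<otimes> ?FX) ** mT F J K) = (idL ?FX ** mT F J K) ;; (cc X ** idL (FO' ?JK))"
    using X J K by (simp add: L_merge ty nrm L_ten_id)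
  have n: "(FA' (diag C X) ** FA' (idC ?JK)) ;; mT F (X \<times>c X) ?JK = mT F X ?JK ;; FA' (diag C X *c idC ?JK)"
    using mT_nat[of "diag C X" "idC ?JK"] X J K by (simp add: ty)
  have "cc X ** idL (FO' J \<otimes> FO' K) ;; ((idL ?FX ** ((idL ?FX ** mT F J K) ;; mT F X ?JK)) ;; mT F X (X \<times>c ?JK))
     = cc X ** idL (FO' J \<otimes> FO' K) ;; ((idL (?FX \<otimes> ?FX) ** mT F J K) ;; ((mT F X X ** idL (FO' ?JK)) ;; mT F (X \<times>c X) ?JK))"
    unfolding s using X J K by (simp add: a[symmetric] ty nrm)
  also have "\<dots> = (idL ?FX ** mT F J K) ;; ((cc X ** idL (FO' ?JK)) ;; ((mT F X X ** idL (FO' ?JK)) ;; mT F (X \<times>c X) ?JK))"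
    by (rule ctx2[OF i]) (use X J K in \<open>simp_all add: ty nrm\<close>)
  also have "\<dots> = (idL ?FX ** mT F J K) ;; ((FA' (diag C X) ** FA' (idC ?JK)) ;; mT F (X \<times>c X) ?JK)"
    using X J K by (simp add: L_merge_ctx contr_def ty nrm mT_inv)
  also have "\<dots> = (idL (FO' X) ** mT F J K) ;; (mT F X (J \<times>c K) ;; FA' (diag C X *c idC (J \<times>c K)))"
    by (simp only: n)
  finally show ?thesis .
qed

end

context lnl begin

lemma natcore:
  assumes X: "obC X" and J: "obC J" and K: "obC K" and J': "obC J'" and K': "obC K'"
    and u: "arC u" "dmC u = X \<times>c J" "cdC u = J'" and v: "arC v" "dmC v = X \<times>c K" "cdC v = K'"
  shows "cc X ** idL (FO' J \<otimes> FO' K) ;; ((idL (FO' X) ** Sym L (FO' X) (FO' J)) ** idL (FO' K))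
          ;; ((mT F X J ;; FA' u) ** (mT F X K ;; FA' v)) ;; mT F J' K'
   = (idL (FO' X) ** mT F J K) ;; (mT F X (J \<times>c K) ;; FA' (((diag C X *c idC (J \<times>c K)) ;c ((idC X *c csym C X J) *c idC K)) ;c (u *c v)))"
proof -
  let ?s = "Sym L (FO' X) (FO' J)" and ?FX = "FO' X"
  let ?M3a = "(idL (FO' J) ** mT F X K) ;; mT F J (X \<times>c K)"
  let ?M3b = "(idL (FO' X) ** mT F J K) ;; mT F X (J \<times>c K)"
  let ?g = "csym C X J *c idC K" and ?uv = "FA' (u *c v)"
  note t = X J K J' K' u v
  have nuv: "(FA' u ** FA' v) ;; mT F J' K' = mT F (X \<times>c J) (X \<times>c K) ;; ?uv"
    using mT_nat[of u v] t by simp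
  have b1: "(mT F X J ** mT F X K) ;; mT F (X \<times>c J) (X \<times>c K) = (idL ?FX ** ?M3a) ;; mT F X (J \<times>c (X \<times>c K))"
    using B1 t by simp
  have b3: "(idL ?FX ** FA' ?g) ;; mT F X (J \<times>c (X \<times>c K)) = mT F X (X \<times>c (J \<times>c K)) ;; FA' (idC X *c ?g)"
    using B3[of X ?g] t by (simp add: ty)
  have "idL ?FX ** (?M3b ;; FA' ?g) = (idL ?FX ;; idL ?FX) ** (?M3b ;; FA' ?g)" using t by (simp add: ty L_idl)
  also have "\<dots> = (idL ?FX ** ?M3b) ;; (idL ?FX ** FA' ?g)"
    by (rule L_interchange) (use t in \<open>simp_all add: ty\<close>)
  finally have sp: "idL ?FX ** (?M3b ;; FA' ?g) = (idL ?FX ** ?M3b) ;; (idL ?FX ** FA' ?g)" .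
  have "cc X ** idL (FO' J \<otimes> FO' K) ;; ((idL (FO' X) ** Sym L (FO' X) (FO' J)) ** idL (FO' K))
          ;; ((mT F X J ;; FA' u) ** (mT F X K ;; FA' v)) ;; mT F J' K'
     = cc X ** idL (FO' J \<otimes> FO' K) ;; ((idL ?FX ** (?s ** idL (FO' K))) ;; ((mT F X J ** mT F X K) ;; ((FA' u ** FA' v) ;; mT F J' K')))"
    using t by (simp add: L_interchange ty nrm)
  also have "\<dots> = cc X ** idL (FO' J \<otimes> FO' K) ;; ((idL ?FX ** (?s ** idL (FO' K))) ;; ((mT F X J ** mT F X K) ;; (mT F (X \<times>c J) (X \<times>c K) ;; ?uv)))"
    by (simp only: nuv)
  also have "\<dots> = cc X ** idL (FO' J \<otimes> FO' K) ;; ((idL ?FX ** (?s ** idL (FO' K))) ;; ((idL ?FX ** ?M3a) ;; (mT F X (J \<times>c (X \<times>c K)) ;; ?uv)))"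
    using t by (simp add: ctx2[OF b1] ty)
  also have "\<dots> = cc X ** idL (FO' J \<otimes> FO' K) ;; ((idL ?FX ** ((?s ** idL (FO' K)) ;; ?M3a)) ;; (mT F X (J \<times>c (X \<times>c K)) ;; ?uv))"
    by (subst L_merge_ctx) (use t in \<open>simp_all add: ty nrm\<close>)
  also have "\<dots> = cc X ** idL (FO' J \<otimes> FO' K) ;; ((idL ?FX ** (?M3b ;; FA' ?g)) ;; (mT F X (J \<times>c (X \<times>c K)) ;; ?uv))"
    using t by (simp only: B2)
  also have "\<dots> = cc X ** idL (FO' J \<otimes> FO' K) ;; ((idL ?FX ** ?M3b) ;; ((idL ?FX ** FA' ?g) ;; (mT F X (J \<times>c (X \<times>c K)) ;; ?uv)))"
    unfolding sp by (subst L_assoc) (use t in \<open>simp_all add: ty\<close>)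
  also have "\<dots> = cc X ** idL (FO' J \<otimes> FO' K) ;; ((idL ?FX ** ?M3b) ;; (mT F X (X \<times>c (J \<times>c K)) ;; (FA' (idC X *c ?g) ;; ?uv)))"
    using t by (simp add: ctx2[OF b3] ty)
  also have "\<dots> = (cc X ** idL (FO' J \<otimes> FO' K) ;; ((idL ?FX ** ?M3b) ;; mT F X (X \<times>c (J \<times>c K)))) ;; (FA' (idC X *c ?g) ;; ?uv)"
    using t by (simp add: ty nrm)
  also have "\<dots> = ((idL (FO' X) ** mT F J K) ;; (mT F X (J \<times>c K) ;; FA' (diag C X *c idC (J \<times>c K)))) ;; (FA' (idC X *c ?g) ;; ?uv)"
    using t by (simp only: B4)
  also have "\<dots> = (idL (FO' X) ** mT F J K) ;; (mT F X (J \<times>c K) ;; FA' (((diag C X *c idC (J \<times>c K)) ;c ((idC X *c csym C X J) *c idC K)) ;c (u *c v)))"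
    using t by (simp add: FA_cmp ty nrm)
  finally show ?thesis .
qed

end

context lnl begin

lemma compcore:
  assumes X: "obC X" and J: "obC J" and Y: "obC Y" and K: "obC K"
    and f: "arC f" "dmC f = X" "cdC f = Y" and u: "arC u" "dmC u = X \<times>c J" "cdC u = K"
    and v: "arC v" "dmC v = Y \<times>c K"
  shows "mT F X J ;; FA' ((diag C X *c idC J) ;c (f *c u) ;c v)
    = cc X ** idL (FO' J) ;; (FA' f ** (mT F X J ;; FA' u)) ;; (mT F Y K ;; FA' v)"
proof -
  note t = X J Y K f u v
  have e1: "mT F X J ;; FA' (diag C X *c idC J) = (FA' (diag C X) ** idL (FO' J)) ;; mT F (X \<times>c X) J"
    using mT_nat[of "diag C X" "idC J"] t by (simp add: ty nrm)
  have e2: "mT F (X \<times>c X) J = (mTi F X X ** idL (FO' J)) ;; ((idL (FO' X) ** mT F X J) ;; mT F X (X \<times>c J))"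
  proof -
    have "mT F (X \<times>c X) J = ((mTi F X X ;; mT F X X) ** (idL (FO' J) ;; idL (FO' J))) ;; mT F (X \<times>c X) J"
      using t by (simp add: mT_inv ty nrm)
    also have "\<dots> = (mTi F X X ** idL (FO' J)) ;; ((mT F X X ** idL (FO' J)) ;; mT F (X \<times>c X) J)"
      by (subst L_merge_ctx) (use t in \<open>simp_all add: ty\<close>)
    also have "\<dots> = (mTi F X X ** idL (FO' J)) ;; ((idL (FO' X) ** mT F X J) ;; mT F X (X \<times>c J))"
      using mT_assoc[of X X J] t by (simp add: ty)
    finally show ?thesis .
  qed
  have e3: "mT F X (X \<times>c J) ;; FA' (f *c u) = (FA' f ** FA' u) ;; mT F Y K"
    using mT_nat[of f u] t by (simp add: ty)
  have "mT F X J ;; FA' ((diag C X *c idC J) ;c (f *c u) ;c v)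
     = mT F X J ;; (FA' (diag C X *c idC J) ;; (FA' (f *c u) ;; FA' v))"
    using t by (simp add: FA_cmp ty nrm)
  also have "\<dots> = (FA' (diag C X) ** idL (FO' J)) ;; (mT F (X \<times>c X) J ;; (FA' (f *c u) ;; FA' v))"
    using t by (simp add: ctx2[OF e1] ty)
  also have "\<dots> = (FA' (diag C X) ** idL (FO' J)) ;; ((mTi F X X ** idL (FO' J)) ;; ((idL (FO' X) ** mT F X J) ;; (mT F X (X \<times>c J) ;; (FA' (f *c u) ;; FA' v))))"
    unfolding e2 using t by (simp add: ty nrm)
  also have "\<dots> = (FA' (diag C X) ** idL (FO' J)) ;; ((mTi F X X ** idL (FO' J)) ;; ((idL (FO' X) ** mT F X J) ;; ((FA' f ** FA' u) ;; (mT F Y K ;; FA' v))))"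
    using t by (simp add: ctx2[OF e3] ty)
  also have "\<dots> = cc X ** idL (FO' J) ;; (FA' f ** (mT F X J ;; FA' u)) ;; (mT F Y K ;; FA' v)"
    using t by (simp add: L_merge_ctx contr_def ty nrm)
  finally show ?thesis .
qed

lemma lift_eq: "obC X \<Longrightarrow> ar h \<Longrightarrow> (w X ** idL (dm h)) ;; h = w X ** h"
proof -
  assume X: "obC X" and h: "ar h"
  have "w X ** h = (w X ;; idL U) ** (idL (dm h) ;; h)" using X h by (simp add: ty nrm)
  also have "\<dots> = (w X ** idL (dm h)) ;; (idL U ** h)" by (rule L_interchange) (use X h in \<open>simp_all add: ty\<close>)
  finally show ?thesis using X h by (simp add: ty nrm)
qed

end

context lnl begin

lemma SC_arrE:
  assumes "a \<in> Arr (SC C)"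
  obtains X J Y K f u where "a = ((X,J),(Y,K),f,u)" "obC X" "obC J" "obC Y" "obC K"
    "arC f" "dmC f = X" "cdC f = Y" "arC u" "dmC u = X \<times>c J" "cdC u = K"
  using assms unfolding SC_def hom_def by auto

lemma FSm_simp: "FSm L F ((X,J),(Y,K),f,u) = ((X, FO' J), (Y, FO' K), f, mT F X J ;; FA' u)"
  unfolding FSm_def by simp

lemma FSo_simp: "FSo F (X,J) = (X, FO' J)" unfolding FSo_def by simp

lemma part1: "functor (SC C) (LSC C L F) (FSo F) (FSm L F)"
  unfolding functor_def
proof (intro conjI ballI impI)
  fix A assume "A \<in> Obj (SC C)"
  then show "FSo F A \<in> Obj (LSC C L F)" by (auto simp: SC_def LSC_def FSo_def ty)
next
  fix a assume "a \<in> Arr (SC C)"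
  then show "FSm L F a \<in> hom (LSC C L F) (FSo F (Dom (SC C) a)) (FSo F (Cod (SC C) a))"
    by (rule SC_arrE) (auto simp: SC_def LSC_def FSo_simp FSm_simp hom_def ty)
next
  fix A assume "A \<in> Obj (SC C)"
  then obtain X J where A: "A = (X,J)" "obC X" "obC J" by (auto simp: SC_def)
  then show "FSm L F (Idt (SC C) A) = Idt (LSC C L F) (FSo F A)"
    by (simp add: SC_def LSC_def FSo_simp FSm_simp mT_pr2)
next
  fix a b assume a: "a \<in> Arr (SC C)" and b: "b \<in> Arr (SC C)" and ab: "Cod (SC C) a = Dom (SC C) b"
  obtain X J Y K f u where ae: "a = ((X,J),(Y,K),f,u)" "obC X" "obC J" "obC Y" "obC K"
    "arC f" "dmC f = X" "cdC f = Y" "arC u" "dmC u = X \<times>c J" "cdC u = K" using a by (rule SC_arrE)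
  obtain Y' K' Z M g v where be: "b = ((Y',K'),(Z,M),g,v)" "obC Y'" "obC K'" "obC Z" "obC M"
    "arC g" "dmC g = Y'" "cdC g = Z" "arC v" "dmC v = Y' \<times>c K'" "cdC v = M" using b by (rule SC_arrE)
  have yy: "Y' = Y" "K' = K" using ab ae be by (auto simp: SC_def)
  show "FSm L F (Cmp (SC C) a b) = Cmp (LSC C L F) (FSm L F a) (FSm L F b)"
    using ae be unfolding yy
    by (simp add: SC_def LSC_def FSm_simp compcore)
qed

end

context lnl begin

lemma fibS_arrE:
  assumes "a \<in> Arr (fibS C X)"
  obtains J J' u where "a = ((X,J),(X,J'),idC X,u)" "obC X" "obC J" "obC J'"
    "arC u" "dmC u = X \<times>c J" "cdC u = J'"
  using assms unfolding fibS_def SC_def hom_def base_arr_def by auto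

lemma lift_eq': "obC X \<Longrightarrow> ar h \<Longrightarrow> dm h = A \<Longrightarrow> (w X ** idL A) ;; h = w X ** h"
  using lift_eq by blast

lemma fib_cmp_lift: "obC X \<Longrightarrow> ob A \<Longrightarrow> ar a \<Longrightarrow> dm a = FO' X \<otimes> A \<Longrightarrow> cd a = B \<Longrightarrow> ar h \<Longrightarrow> dm h = B \<Longrightarrow>
  cc X ** idL A ;; (FA' (idC X) ** a) ;; ((w X ** idL B) ;; h) = a ;; h"
  using liftR[of X A a h] lift_eq'[of X h B] by (simp add: FA_id)

lemma fib_lift_cmp: "obC X \<Longrightarrow> ob A \<Longrightarrow> ar h \<Longrightarrow> dm h = A \<Longrightarrow> ar a \<Longrightarrow> dm a = FO' X \<otimes> cd h \<Longrightarrow>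
  cc X ** idL A ;; (FA' (idC X) ** ((w X ** idL A) ;; h)) ;; a = (idL (FO' X) ** h) ;; a"
  using liftL[of X A h a] lift_eq'[of X h A] by (simp add: FA_id)

lemma fib_nat: "obC X \<Longrightarrow> f \<in> Arr (fibS C X) \<Longrightarrow> g \<in> Arr (fibS C X) \<Longrightarrow>
        Cmp (fibLS C L F X) (TenA (fibLS C L F X) (FSm L F f) (FSm L F g)) (FS_tensor C L F X (Cod (fibS C X) f) (Cod (fibS C X) g)) =
        Cmp (fibLS C L F X) (FS_tensor C L F X (Dom (fibS C X) f) (Dom (fibS C X) g)) (FSm L F (TenA (fibS C X) f g))"
proof -
  assume X: "obC X" and f: "f \<in> Arr (fibS C X)" and g: "g \<in> Arr (fibS C X)"
  obtain J J' u where fe: "f = ((X,J),(X,J'),idC X,u)" "obC J" "obC J'"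
    "arC u" "dmC u = X \<times>c J" "cdC u = J'" using f by (rule fibS_arrE)
  obtain K K' v where ge: "g = ((X,K),(X,K'),idC X,v)" "obC K" "obC K'"
    "arC v" "dmC v = X \<times>c K" "cdC v = K'" using g by (rule fibS_arrE)
  note t = X fe(2-) ge(2-)
  let ?T1 = "cc X ** idL (FO' J \<otimes> FO' K) ;; ((idL (FO' X) ** Sym L (FO' X) (FO' J)) ** idL (FO' K))
          ;; ((mT F X J ;; FA' u) ** (mT F X K ;; FA' v))"
  let ?U = "((diag C X *c idC (J \<times>c K)) ;c ((idC X *c csym C X J) *c idC K)) ;c (u *c v)"
  have r1: "cc X ** idL (FO' J \<otimes> FO' K) ;; (FA' (idC X) ** ?T1) ;; ((w X ** idL (FO' J' \<otimes> FO' K')) ;; mT F J' K')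
      = ?T1 ;; mT F J' K'"
    by (rule fib_cmp_lift) (use t in \<open>simp_all add: ty\<close>)
  have r2: "cc X ** idL (FO' J \<otimes> FO' K) ;; (FA' (idC X) ** ((w X ** idL (FO' J \<otimes> FO' K)) ;; mT F J K)) ;; (mT F X (J \<times>c K) ;; FA' ?U)
      = (idL (FO' X) ** mT F J K) ;; (mT F X (J \<times>c K) ;; FA' ?U)"
    by (rule fib_lift_cmp) (use t in \<open>simp_all add: ty\<close>)
  have r3: "?T1 ;; mT F J' K' = (idL (FO' X) ** mT F J K) ;; (mT F X (J \<times>c K) ;; FA' ?U)"
    by (rule natcore) (use t in \<open>simp_all\<close>)
  show ?thesis
    unfolding fe(1) ge(1)
    by (simp only: fibLS_def fibS_def LSC_def SC_def FSm_def FS_tensor_def cat.select_convs mcat.select_convs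
        smcat.select_convs prod.case fst_conv snd_conv r1 r2 r3)
qed


lemma liftC: "obC X \<Longrightarrow> ar k \<Longrightarrow> ar h \<Longrightarrow> cd k = dm h \<Longrightarrow> (w X ** k) ;; h = w X ** (k ;; h)"
proof -
  assume X: "obC X" and k: "ar k" and h: "ar h" "cd k = dm h"
  have "w X ** (k ;; h) = (w X ;; idL U) ** (k ;; h)" using X k h by (simp add: ty nrm)
  also have "\<dots> = (w X ** k) ;; (idL U ** h)" by (rule L_interchange) (use X k h in \<open>simp_all add: ty\<close>)
  finally show ?thesis using X k h by (simp add: ty nrm)
qed

lemmas defsE = fibLS_def fibS_def LSC_def SC_def FSm_def FSo_def FS_tensor_def FS_unit_def cat.select_convs mcat.select_convs
        smcat.select_convs prod.case fst_conv snd_conv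

lemma fib_assoc: "obC X \<Longrightarrow> obC J \<Longrightarrow> obC K \<Longrightarrow> obC M \<Longrightarrow>
  Cmp (fibLS C L F X) (TenA (fibLS C L F X) (FS_tensor C L F X (X,J) (X,K)) (Idt (fibLS C L F X) (FSo F (X,M))))
      (FS_tensor C L F X (Ten (fibS C X) (X,J) (X,K)) (X,M)) =
  Cmp (fibLS C L F X) (TenA (fibLS C L F X) (Idt (fibLS C L F X) (FSo F (X,J))) (FS_tensor C L F X (X,K) (X,M)))
      (FS_tensor C L F X (X,J) (Ten (fibS C X) (X,K) (X,M)))"
proof -
  assume X: "obC X" and J: "obC J" and K: "obC K" and M: "obC M"
  note t = X J K M
  let ?FJK = "FO' J \<otimes> FO' K" and ?FKM = "FO' K \<otimes> FO' M"
  have a1: "(w X ** idL ?FJK) ;; mT F J K = w X ** mT F J K" by (rule lift_eq') (use t in \<open>simp_all add: ty\<close>)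
  have a2: "(w X ** idL ?FKM) ;; mT F K M = w X ** mT F K M" by (rule lift_eq') (use t in \<open>simp_all add: ty\<close>)
  have b1: "cc X ** idL (?FJK \<otimes> FO' M) ;; ((idL (FO' X) ** Sym L (FO' X) ?FJK) ** idL (FO' M)) ;; ((w X ** mT F J K) ** (w X ** idL (FO' M)))
     = w X ** (mT F J K ** idL (FO' M))" by (rule liftT) (use t in \<open>simp_all add: ty\<close>)
  have b2: "cc X ** idL (FO' J \<otimes> ?FKM) ;; ((idL (FO' X) ** Sym L (FO' X) (FO' J)) ** idL ?FKM) ;; ((w X ** idL (FO' J)) ** (w X ** mT F K M))
     = w X ** (idL (FO' J) ** mT F K M)" by (rule liftT) (use t in \<open>simp_all add: ty\<close>)
  have c1: "cc X ** idL (?FJK \<otimes> FO' M) ;; (FA' (idC X) ** (w X ** (mT F J K ** idL (FO' M)))) ;; ((w X ** idL (FO' (J \<times>c K) \<otimes> FO' M)) ;; mT F (J \<times>c K) M)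
     = (w X ** (mT F J K ** idL (FO' M))) ;; mT F (J \<times>c K) M" by (rule fib_cmp_lift) (use t in \<open>simp_all add: ty\<close>)
  have c2: "cc X ** idL (FO' J \<otimes> ?FKM) ;; (FA' (idC X) ** (w X ** (idL (FO' J) ** mT F K M))) ;; ((w X ** idL (FO' J \<otimes> FO' (K \<times>c M))) ;; mT F J (K \<times>c M))
     = (w X ** (idL (FO' J) ** mT F K M)) ;; mT F J (K \<times>c M)" by (rule fib_cmp_lift) (use t in \<open>simp_all add: ty\<close>)
  have d1: "(w X ** (mT F J K ** idL (FO' M))) ;; mT F (J \<times>c K) M = w X ** ((mT F J K ** idL (FO' M)) ;; mT F (J \<times>c K) M)"
    by (rule liftC) (use t in \<open>simp_all add: ty\<close>)
  have d2: "(w X ** (idL (FO' J) ** mT F K M)) ;; mT F J (K \<times>c M) = w X ** ((idL (FO' J) ** mT F K M) ;; mT F J (K \<times>c M))"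
    by (rule liftC) (use t in \<open>simp_all add: ty\<close>)
  show ?thesis
    by (simp only: defsE a1 a2 b1 b2 c1 c2 d1 d2 mT_assoc[OF J K M]) (use t in \<open>simp_all add: ty\<close>)
qed

lemma fib_unitl: "obC X \<Longrightarrow> obC J \<Longrightarrow>
  Cmp (fibLS C L F X) (TenA (fibLS C L F X) (FS_unit C L F X) (Idt (fibLS C L F X) (FSo F (X,J))))
      (FS_tensor C L F X (Unit (fibS C X)) (X,J)) = Idt (fibLS C L F X) (FSo F (X,J))"
proof -
  assume X: "obC X" and J: "obC J"
  note t = X J
  have a1: "(w X ** idL U) ;; mU F = w X ** mU F" by (rule lift_eq') (use t in \<open>simp_all add: ty\<close>)
  have b1: "cc X ** idL (U \<otimes> FO' J) ;; ((idL (FO' X) ** Sym L (FO' X) U) ** idL (FO' J)) ;; ((w X ** mU F) ** (w X ** idL (FO' J)))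
     = w X ** (mU F ** idL (FO' J))" by (rule liftT) (use t in \<open>simp_all add: ty\<close>)
  have c1: "cc X ** idL (U \<otimes> FO' J) ;; (FA' (idC X) ** (w X ** (mU F ** idL (FO' J)))) ;; ((w X ** idL (FO' I \<otimes> FO' J)) ;; mT F I J)
     = (w X ** (mU F ** idL (FO' J))) ;; mT F I J" by (rule fib_cmp_lift) (use t in \<open>simp_all add: ty\<close>)
  have d1: "(w X ** (mU F ** idL (FO' J))) ;; mT F I J = w X ** ((mU F ** idL (FO' J)) ;; mT F I J)"
    by (rule liftC) (use t in \<open>simp_all add: ty\<close>)
  show ?thesis
    by (simp only: defsE a1 b1 c1 d1 mT_unit(1)[OF J]) (use t in \<open>simp_all add: ty nrm\<close>)
qed

lemma fib_unitr: "obC X \<Longrightarrow> obC J \<Longrightarrow>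
  Cmp (fibLS C L F X) (TenA (fibLS C L F X) (Idt (fibLS C L F X) (FSo F (X,J))) (FS_unit C L F X))
      (FS_tensor C L F X (X,J) (Unit (fibS C X))) = Idt (fibLS C L F X) (FSo F (X,J))"
proof -
  assume X: "obC X" and J: "obC J"
  note t = X J
  have a1: "(w X ** idL U) ;; mU F = w X ** mU F" by (rule lift_eq') (use t in \<open>simp_all add: ty\<close>)
  have b1: "cc X ** idL (FO' J \<otimes> U) ;; ((idL (FO' X) ** Sym L (FO' X) (FO' J)) ** idL U) ;; ((w X ** idL (FO' J)) ** (w X ** mU F))
     = w X ** (idL (FO' J) ** mU F)" by (rule liftT) (use t in \<open>simp_all add: ty\<close>)
  have c1: "cc X ** idL (FO' J \<otimes> U) ;; (FA' (idC X) ** (w X ** (idL (FO' J) ** mU F))) ;; ((w X ** idL (FO' J \<otimes> FO' I)) ;; mT F J I)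
     = (w X ** (idL (FO' J) ** mU F)) ;; mT F J I" by (rule fib_cmp_lift) (use t in \<open>simp_all add: ty\<close>)
  have d1: "(w X ** (idL (FO' J) ** mU F)) ;; mT F J I = w X ** ((idL (FO' J) ** mU F) ;; mT F J I)"
    by (rule liftC) (use t in \<open>simp_all add: ty\<close>)
  show ?thesis
    by (simp only: defsE a1 b1 c1 d1 mT_unit(2)[OF J]) (use t in \<open>simp_all add: ty nrm\<close>)
qed

lemma fib_sym: "obC X \<Longrightarrow> obC J \<Longrightarrow> obC K \<Longrightarrow>
  Cmp (fibLS C L F X) (FS_tensor C L F X (X,J) (X,K)) (FSm L F (Sym (fibS C X) (X,J) (X,K))) =
  Cmp (fibLS C L F X) (Sym (fibLS C L F X) (FSo F (X,J)) (FSo F (X,K))) (FS_tensor C L F X (X,K) (X,J))"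
proof -
  assume X: "obC X" and J: "obC J" and K: "obC K"
  note t = X J K
  have r1: "cc X ** idL (FO' J \<otimes> FO' K) ;; (FA' (idC X) ** ((w X ** idL (FO' J \<otimes> FO' K)) ;; mT F J K)) ;; (mT F X (J \<times>c K) ;; FA' (Pr2 C X (J \<times>c K) ;c csym C J K))
     = (idL (FO' X) ** mT F J K) ;; (mT F X (J \<times>c K) ;; FA' (Pr2 C X (J \<times>c K) ;c csym C J K))"
    by (rule fib_lift_cmp) (use t in \<open>simp_all add: ty\<close>)
  have r2: "cc X ** idL (FO' J \<otimes> FO' K) ;; (FA' (idC X) ** (w X ** Sym L (FO' J) (FO' K))) ;; ((w X ** idL (FO' K \<otimes> FO' J)) ;; mT F K J)
     = (w X ** Sym L (FO' J) (FO' K)) ;; mT F K J"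
    by (rule fib_cmp_lift) (use t in \<open>simp_all add: ty\<close>)
  have r3: "(w X ** Sym L (FO' J) (FO' K)) ;; mT F K J = w X ** (Sym L (FO' J) (FO' K) ;; mT F K J)"
    by (rule liftC) (use t in \<open>simp_all add: ty\<close>)
  have "(idL (FO' X) ** mT F J K) ;; (mT F X (J \<times>c K) ;; FA' (Pr2 C X (J \<times>c K) ;c csym C J K))
      = (idL (FO' X) ** mT F J K) ;; ((mT F X (J \<times>c K) ;; FA' (Pr2 C X (J \<times>c K))) ;; FA' (csym C J K))"
    using t by (simp add: FA_cmp ty nrm)
  also have "\<dots> = ((idL (FO' X) ** mT F J K) ;; (w X ** idL (FO' (J \<times>c K)))) ;; FA' (csym C J K)"
    using t by (simp add: mT_pr2 ty nrm)
  also have "\<dots> = (w X ** mT F J K) ;; FA' (csym C J K)"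
    using t by (simp add: L_merge ty nrm)
  also have "\<dots> = w X ** (mT F J K ;; FA' (csym C J K))"
    by (rule liftC) (use t in \<open>simp_all add: ty\<close>)
  also have "\<dots> = w X ** (Sym L (FO' J) (FO' K) ;; mT F K J)"
    using t by (simp add: mT_sym)
  finally have r4: "(idL (FO' X) ** mT F J K) ;; (mT F X (J \<times>c K) ;; FA' (Pr2 C X (J \<times>c K) ;c csym C J K))
     = w X ** (Sym L (FO' J) (FO' K) ;; mT F K J)" .
  show ?thesis
    by (simp only: defsE r1 r2 r3 r4)
qed

end

context lnl begin

lemma fibS_obE: assumes "A \<in> Obj (fibS C X)" obtains J where "A = (X,J)" "obC J"
  using assms by (auto simp: fibS_def)

lemma part5: assumes X: "obC X"
  shows "sym_lax_monoidal_functor (fibS C X) (fibLS C L F X) (FSo F) (FSm L F)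
          (FS_unit C L F X) (FS_tensor C L F X)"
  unfolding sym_lax_monoidal_functor_def
proof (intro conjI ballI)
  show "functor (fibS C X) (fibLS C L F X) (FSo F) (FSm L F)"
    unfolding functor_def
  proof (intro conjI ballI impI)
    fix A assume "A \<in> Obj (fibS C X)"
    then show "FSo F A \<in> Obj (fibLS C L F X)" by (auto simp: fibS_def fibLS_def FSo_def ty)
  next
    fix a assume "a \<in> Arr (fibS C X)"
    then show "FSm L F a \<in> hom (fibLS C L F X) (FSo F (Dom (fibS C X) a)) (FSo F (Cod (fibS C X) a))"
      by (rule fibS_arrE) (auto simp: fibS_def fibLS_def LSC_def SC_def FSo_simp FSm_simp hom_def base_arr_def ty)
  next
    fix A assume "A \<in> Obj (fibS C X)"
    then obtain J where A: "A = (X,J)" "obC J" by (rule fibS_obE)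
    then show "FSm L F (Idt (fibS C X) A) = Idt (fibLS C L F X) (FSo F A)"
      using X by (simp add: fibS_def fibLS_def SC_def LSC_def FSo_simp FSm_simp mT_pr2)
  next
    fix a b assume a: "a \<in> Arr (fibS C X)" and b: "b \<in> Arr (fibS C X)" and ab: "Cod (fibS C X) a = Dom (fibS C X) b"
    have "a \<in> Arr (SC C)" "b \<in> Arr (SC C)" using a b by (auto simp: fibS_def)
    moreover have "Cod (SC C) a = Dom (SC C) b" using ab by (simp add: fibS_def)
    ultimately have "FSm L F (Cmp (SC C) a b) = Cmp (LSC C L F) (FSm L F a) (FSm L F b)"
      using part1 unfolding functor_def by blast
    then show "FSm L F (Cmp (fibS C X) a b) = Cmp (fibLS C L F X) (FSm L F a) (FSm L F b)"
      by (simp add: fibS_def fibLS_def)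
  qed
next
  show "FS_unit C L F X \<in> hom (fibLS C L F X) (Unit (fibLS C L F X)) (FSo F (Unit (fibS C X)))"
    using X by (auto simp: fibS_def fibLS_def LSC_def FS_unit_def FSo_def hom_def base_arr_def ty)
next
  fix A B assume A: "A \<in> Obj (fibS C X)" and B: "B \<in> Obj (fibS C X)"
  obtain J where J: "A = (X,J)" "obC J" using A by (rule fibS_obE)
  obtain K where K: "B = (X,K)" "obC K" using B by (rule fibS_obE)
  show "FS_tensor C L F X A B \<in> hom (fibLS C L F X) (Ten (fibLS C L F X) (FSo F A) (FSo F B)) (FSo F (Ten (fibS C X) A B))"
    using X J K by (auto simp: fibS_def fibLS_def LSC_def FS_tensor_def FSo_def hom_def base_arr_def ty)
next
  fix f g assume "f \<in> Arr (fibS C X)" "g \<in> Arr (fibS C X)"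
  then show "Cmp (fibLS C L F X) (TenA (fibLS C L F X) (FSm L F f) (FSm L F g)) (FS_tensor C L F X (Cod (fibS C X) f) (Cod (fibS C X) g)) =
        Cmp (fibLS C L F X) (FS_tensor C L F X (Dom (fibS C X) f) (Dom (fibS C X) g)) (FSm L F (TenA (fibS C X) f g))"
    using X fib_nat by blast
next
  fix A B D assume A: "A \<in> Obj (fibS C X)" and B: "B \<in> Obj (fibS C X)" and D: "D \<in> Obj (fibS C X)"
  obtain J where J: "A = (X,J)" "obC J" using A by (rule fibS_obE)
  obtain K where K: "B = (X,K)" "obC K" using B by (rule fibS_obE)
  obtain M where M: "D = (X,M)" "obC M" using D by (rule fibS_obE)
  show "Cmp (fibLS C L F X) (TenA (fibLS C L F X) (FS_tensor C L F X A B) (Idt (fibLS C L F X) (FSo F D)))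
          (FS_tensor C L F X (Ten (fibS C X) A B) D) =
        Cmp (fibLS C L F X) (TenA (fibLS C L F X) (Idt (fibLS C L F X) (FSo F A)) (FS_tensor C L F X B D))
          (FS_tensor C L F X A (Ten (fibS C X) B D))"
    unfolding J(1) K(1) M(1) using fib_assoc X J(2) K(2) M(2) by blast
next
  fix A assume A: "A \<in> Obj (fibS C X)"
  obtain J where J: "A = (X,J)" "obC J" using A by (rule fibS_obE)
  show "Cmp (fibLS C L F X) (TenA (fibLS C L F X) (FS_unit C L F X) (Idt (fibLS C L F X) (FSo F A)))
      (FS_tensor C L F X (Unit (fibS C X)) A) = Idt (fibLS C L F X) (FSo F A)"
    unfolding J(1) using fib_unitl X J(2) by blast
  show "Cmp (fibLS C L F X) (TenA (fibLS C L F X) (Idt (fibLS C L F X) (FSo F A)) (FS_unit C L F X))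
      (FS_tensor C L F X A (Unit (fibS C X))) = Idt (fibLS C L F X) (FSo F A)"
    unfolding J(1) using fib_unitr X J(2) by blast
next
  fix A B assume A: "A \<in> Obj (fibS C X)" and B: "B \<in> Obj (fibS C X)"
  obtain J where J: "A = (X,J)" "obC J" using A by (rule fibS_obE)
  obtain K where K: "B = (X,K)" "obC K" using B by (rule fibS_obE)
  show "Cmp (fibLS C L F X) (FS_tensor C L F X A B) (FSm L F (Sym (fibS C X) A B)) =
        Cmp (fibLS C L F X) (Sym (fibLS C L F X) (FSo F A) (FSo F B)) (FS_tensor C L F X B A)"
    unfolding J(1) K(1) using fib_sym X J(2) K(2) by blast
qed

lemma main: "functor (SC C) (LSC C L F) (FSo F) (FSm L F)
    \<and> (\<forall>A\<in>Obj (SC C). fst (FSo F A) = fst A)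
    \<and> (\<forall>a\<in>Arr (SC C). base_arr (FSm L F a) = base_arr a)
    \<and> (\<forall>f\<in>Arr C. \<forall>K\<in>Obj C. FSm L F (cartS C f K) = cartLS C L F f (FO F K))
    \<and> (\<forall>X\<in>Obj C. sym_lax_monoidal_functor (fibS C X) (fibLS C L F X) (FSo F) (FSm L F)
          (FS_unit C L F X) (FS_tensor C L F X))"
proof (intro conjI ballI)
  show "functor (SC C) (LSC C L F) (FSo F) (FSm L F)" by (rule part1)
next
  fix A assume "A \<in> Obj (SC C)"
  then show "fst (FSo F A) = fst A" by (auto simp: FSo_def split: prod.splits)
next
  fix a assume "a \<in> Arr (SC C)"
  then show "base_arr (FSm L F a) = base_arr a"
    by (rule SC_arrE) (simp add: FSm_simp base_arr_def)
next
  fix f K assume f: "f \<in> Arr C" and K: "K \<in> Obj C"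
  show "FSm L F (cartS C f K) = cartLS C L F f (FO F K)"
    using f K by (simp add: cartS_def cartLS_def FSm_simp mT_pr2 ty)
next
  fix X assume "X \<in> Obj C"
  then show "sym_lax_monoidal_functor (fibS C X) (fibLS C L F X) (FSo F) (FSm L F)
          (FS_unit C L F X) (FS_tensor C L F X)" by (rule part5)
qed

end

theorem proposition3p14:
  fixes C :: "('o,'m,'z1) ccat_scheme" and L :: "('p,'n,'z2) smcat_scheme"
    and F :: "('o,'m,'p,'n) lnl_data"
  assumes "lnl_adjunction C L F"
  shows "functor (SC C) (LSC C L F) (FSo F) (FSm L F)
    \<and> (\<forall>A\<in>Obj (SC C). fst (FSo F A) = fst A)
    \<and> (\<forall>a\<in>Arr (SC C). base_arr (FSm L F a) = base_arr a)
    \<and> (\<forall>f\<in>Arr C. \<forall>K\<in>Obj C. FSm L F (cartS C f K) = cartLS C L F f (FO F K))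
    \<and> (\<forall>X\<in>Obj C. sym_lax_monoidal_functor (fibS C X) (fibLS C L F X) (FSo F) (FSm L F)
          (FS_unit C L F X) (FS_tensor C L F X))"
  using lnl.main[OF lnl.intro[OF assms]] .

end
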